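(* The contravariant components $\Gamma^{ij}_k(u)=-\sum_s g^{is}(u)\Gamma^j_{sk}(u)$ of the Levi-Civita connection defined by $g$, written in the coordinates $(u_1,\dots,u_n)$, are polynomial functions of $(u_1,\dots,u_n)$ which depend at most linearly on $u_{n-1}$.
   Context: $n\ge2$. $g$ is the $B_n$-invariant flat cometric $g^{ij}(p)=\frac{1-\delta^{ij}}{p_ip_j}$ on $\mathbb{C}^n$ (with inverse metric $g_{ij}(p)=(\frac{1}{n-1}-\delta_{ij})p_ip_j$), where $B_n$ acts by permutations and sign changes of coordinates; $u_k=\sum_{1\le i_1<\dots<i_k\le n}p_{i_1}^2\cdots p_{i_k}^2$ are basic invariants used as coordinates on the orbit space, $g^{ij}(u)=\sum_{k,l}g^{kl}(p)\frac{\partial u_i}{\partial p_k}\frac{\partial u_j}{\partial p_l}$, and $\Gamma^j_{sk}(u)$ are the Christoffel symbols of the Levi-Civita connection of $g$ in the coordinates $u$. *)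

theory Defs
  imports "HOL-Analysis.Analysis"
begin

text \<open>Points of C^n are encoded as functions nat => complex, coordinates indexed by 1..n,
  vanishing outside {1..n}. nat => complex carries the product topology.\<close>

definition Cn :: "nat \<Rightarrow> (nat \<Rightarrow> complex) set" where
  "Cn n = {v. \<forall>k. k \<notin> {1..n} \<longrightarrow> v k = 0}"

definition pd :: "((nat \<Rightarrow> complex) \<Rightarrow> complex) \<Rightarrow> (nat \<Rightarrow> complex) \<Rightarrow> nat \<Rightarrow> complex" where
  "pd f v k = deriv (\<lambda>t. f (v(k := t))) (v k)"

definition ubasic :: "nat \<Rightarrow> nat \<Rightarrow> (nat \<Rightarrow> complex) \<Rightarrow> complex" where
  "ubasic n k p = (\<Sum>S\<in>{S. S \<subseteq> {1..n} \<and> card S = k}. \<Prod>i\<in>S. (p i)^2)"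

definition umap :: "nat \<Rightarrow> (nat \<Rightarrow> complex) \<Rightarrow> (nat \<Rightarrow> complex)" where
  "umap n p = (\<lambda>k. if k \<in> {1..n} then ubasic n k p else 0)"

definition gcop :: "(nat \<Rightarrow> complex) \<Rightarrow> nat \<Rightarrow> nat \<Rightarrow> complex" where
  "gcop p i j = (if i = j then 0 else 1 / (p i * p j))"

definition gp :: "nat \<Rightarrow> (nat \<Rightarrow> complex) \<Rightarrow> nat \<Rightarrow> nat \<Rightarrow> complex" where
  "gp n p i j = (1 / (of_nat n - 1) - (if i = j then 1 else 0)) * p i * p j"

definition gcou :: "nat \<Rightarrow> (nat \<Rightarrow> complex) \<Rightarrow> nat \<Rightarrow> nat \<Rightarrow> complex" where
  "gcou n p i j = (\<Sum>k=1..n. \<Sum>l=1..n. gcop p k l * pd (ubasic n i) p k * pd (ubasic n j) p l)"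

text \<open>A local chart of the orbit space by the coordinates u: a continuous local inverse phi of
  the map p |-> u(p) on a (relatively) open set V of C^n, landing in the generic region
  (p_a nonzero, p_a^2 distinct) where u is a local coordinate system.\<close>
definition generic_chart :: "nat \<Rightarrow> (nat \<Rightarrow> complex) set \<Rightarrow> ((nat \<Rightarrow> complex) \<Rightarrow> (nat \<Rightarrow> complex)) \<Rightarrow> bool" where
  "generic_chart n V \<phi> \<longleftrightarrow>
     V \<subseteq> Cn n \<and> openin (top_of_set (Cn n)) V \<and> continuous_on V \<phi> \<and>
     (\<forall>v\<in>V. \<phi> v \<in> Cn n \<and> umap n (\<phi> v) = v \<and>
        (\<forall>a\<in>{1..n}. \<phi> v a \<noteq> 0) \<and>
        (\<forall>a\<in>{1..n}. \<forall>b\<in>{1..n}. a \<noteq> b \<longrightarrow> (\<phi> v a)^2 \<noteq> (\<phi> v b)^2))"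

definition gu_low :: "nat \<Rightarrow> ((nat \<Rightarrow> complex) \<Rightarrow> (nat \<Rightarrow> complex)) \<Rightarrow> (nat \<Rightarrow> complex) \<Rightarrow> nat \<Rightarrow> nat \<Rightarrow> complex" where
  "gu_low n \<phi> v i j = (\<Sum>a=1..n. \<Sum>b=1..n.
      gp n (\<phi> v) a b * pd (\<lambda>w. \<phi> w a) v i * pd (\<lambda>w. \<phi> w b) v j)"

definition christ :: "nat \<Rightarrow> ((nat \<Rightarrow> complex) \<Rightarrow> (nat \<Rightarrow> complex)) \<Rightarrow> (nat \<Rightarrow> complex) \<Rightarrow> nat \<Rightarrow> nat \<Rightarrow> nat \<Rightarrow> complex" where
  "christ n \<phi> v j s k = 1/2 * (\<Sum>l=1..n. gcou n (\<phi> v) j l *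
      (pd (\<lambda>w. gu_low n \<phi> w l k) v s + pd (\<lambda>w. gu_low n \<phi> w l s) v k
       - pd (\<lambda>w. gu_low n \<phi> w s k) v l))"

definition contra :: "nat \<Rightarrow> ((nat \<Rightarrow> complex) \<Rightarrow> (nat \<Rightarrow> complex)) \<Rightarrow> (nat \<Rightarrow> complex) \<Rightarrow> nat \<Rightarrow> nat \<Rightarrow> nat \<Rightarrow> complex" where
  "contra n \<phi> v i j k = - (\<Sum>s=1..n. gcou n (\<phi> v) i s * christ n \<phi> v j s k)"

end

theory Submission
  imports Defs
begin

definition es :: "nat set \<Rightarrow> nat \<Rightarrow> (nat \<Rightarrow> complex) \<Rightarrow> complex" where
  "es T k x = (\<Sum>B\<in>{B. B \<subseteq> T \<and> card B = k}. \<Prod>i\<in>B. x i)"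

lemma es_0: "finite T \<Longrightarrow> es T 0 x = 1"
proof -
  assume "finite T"
  then have "{B. B \<subseteq> T \<and> card B = 0} = {{}}"
    by (auto simp: card_eq_0_iff dest: finite_subset)
  then show ?thesis by (simp add: es_def)
qed

lemma es_big: "finite T \<Longrightarrow> card T < k \<Longrightarrow> es T k x = 0"
proof -
  assume "finite T" "card T < k"
  then have "{B. B \<subseteq> T \<and> card B = k} = {}"
  proof (intro equalityI subsetI)
    fix B assume "B \<in> {B. B \<subseteq> T \<and> card B = k}"
    then have "card B \<le> card T" "card B = k" using card_mono[OF \<open>finite T\<close>] by auto
    then show "B \<in> {}" using \<open>card T < k\<close> by simp
  qed simp
  then show ?thesis unfolding es_def by (simp only: sum.empty)
qed

lemma es_cong: "(\<And>i. i \<in> T \<Longrightarrow> x i = y i) \<Longrightarrow> es T k x = es T k y"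
  unfolding es_def by (intro sum.cong refl prod.cong) auto

lemma es_rec:
  assumes "finite T" "b \<in> T"
  shows "es T (Suc k) x = es (T-{b}) (Suc k) x + x b * es (T-{b}) k x"
proof -
  let ?A = "{B. B \<subseteq> T \<and> card B = Suc k}"
  let ?A1 = "{B. B \<subseteq> T-{b} \<and> card B = Suc k}"
  let ?A2 = "insert b ` {B. B \<subseteq> T-{b} \<and> card B = k}"
  have fin: "finite ?A"
    by (rule finite_subset[of _ "Pow T"]) (use assms(1) in auto)
  have eqA: "?A = ?A1 \<union> ?A2"
  proof (rule set_eqI, rule iffI)
    fix B assume B: "B \<in> ?A"
    have finB: "finite B" using B assms(1) finite_subset by blast
    show "B \<in> ?A1 \<union> ?A2"
    proof (cases "b \<in> B")
      case True
      have e: "B = insert b (B - {b})" using True by blast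
      have "B - {b} \<subseteq> T - {b}" using B by blast
      moreover have "card (B-{b}) = k" using B True finB by (simp add: card_Diff_singleton)
      ultimately have "B \<in> ?A2" using e by blast
      then show ?thesis by blast
    next
      case False then show ?thesis using B by blast
    qed
  next
    fix B assume B: "B \<in> ?A1 \<union> ?A2"
    show "B \<in> ?A"
    proof (cases "B \<in> ?A1")
      case True then show ?thesis by blast
    next
      case False
      then obtain C where C: "C \<subseteq> T-{b}" "card C = k" "B = insert b C" using B by blast
      have "finite C" using C(1) assms(1) finite_subset by blast
      have "b \<notin> C" using C(1) by blast
      then have "card B = Suc k" using C \<open>finite C\<close> by simp
      then show ?thesis using C assms(2) by blast
    qed
  qed
  have disj: "?A1 \<inter> ?A2 = {}" by force
  have fin1: "finite ?A1" "finite ?A2"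
    using fin unfolding eqA by simp_all
  have "es T (Suc k) x = (\<Sum>B\<in>?A1 \<union> ?A2. \<Prod>i\<in>B. x i)"
    unfolding es_def by (simp only: eqA)
  also have "\<dots> = (\<Sum>B\<in>?A1. \<Prod>i\<in>B. x i) + (\<Sum>B\<in>?A2. \<Prod>i\<in>B. x i)"
    by (rule sum.union_disjoint[OF fin1 disj])
  also have "(\<Sum>B\<in>?A2. \<Prod>i\<in>B. x i) = (\<Sum>B\<in>{B. B \<subseteq> T-{b} \<and> card B = k}. \<Prod>i\<in>insert b B. x i)"
    by (rule sum.reindex_cong[where l="insert b"]) (auto simp: inj_on_def)
  also have "\<dots> = x b * es (T-{b}) k x"
    unfolding es_def sum_distrib_left
  proof (intro sum.cong refl)
    fix B assume "B \<in> {B. B \<subseteq> T-{b} \<and> card B = k}"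
    then have "finite B" "b \<notin> B" using assms(1) finite_subset by auto
    then show "(\<Prod>i\<in>insert b B. x i) = x b * (\<Prod>i\<in>B. x i)" by simp
  qed
  also have "(\<Sum>B\<in>?A1. \<Prod>i\<in>B. x i) = es (T-{b}) (Suc k) x" unfolding es_def ..
  finally show ?thesis .
qed

lemma es_insert:
  assumes "finite T" "a \<notin> T"
  shows "es (insert a T) (Suc k) x = es T (Suc k) x + x a * es T k x"
  using es_rec[of "insert a T" a k x] assms by simp

lemma es_vieta:
  assumes "finite T"
  shows "(\<Prod>b\<in>T. (Y - x b)) = (\<Sum>k\<le>card T. (-1)^k * es T k x * Y^(card T - k))"
  using assms
proof (induction T rule: finite_induct)
  case empty
  then show ?case by (simp add: es_0)
next
  case (insert a T)
  let ?m = "card T"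
  let ?e = "\<lambda>k. es T k x"
  have cT: "card (insert a T) = Suc ?m" using insert by simp
  have e0: "es (insert a T) 0 x = 1" "?e 0 = 1" using insert by (simp_all add: es_0)
  have eS: "\<And>k. es (insert a T) (Suc k) x = ?e (Suc k) + x a * ?e k"
    using es_insert[OF insert(1,2)] by blast
  have eb: "?e (Suc ?m) = 0" using es_big[OF insert(1)] by simp
  let ?S = "(\<Sum>k\<le>?m. (-1)^k * ?e k * Y^(?m - k))"
  have P: "(\<Prod>b\<in>insert a T. (Y - x b)) = Y * ?S - x a * ?S"
    using insert by (simp add: algebra_simps)
  have YS: "Y * ?S = (\<Sum>k\<le>?m. (-1)^k * ?e k * Y^(Suc ?m - k))"
    unfolding sum_distrib_left by (rule sum.cong) (auto simp: Suc_diff_le)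
  have A1: "(\<Sum>k\<le>Suc ?m. (-1)^k * ?e k * Y^(Suc ?m - k)) = Y^(Suc ?m) + (\<Sum>k\<le>?m. (-1)^(Suc k) * ?e (Suc k) * Y^(?m - k))"
    by (subst sum.atMost_Suc_shift) (simp add: e0)
  have A2: "(\<Sum>k\<le>Suc ?m. (-1)^k * ?e k * Y^(Suc ?m - k)) = (\<Sum>k\<le>?m. (-1)^k * ?e k * Y^(Suc ?m - k))"
    by (simp add: eb)
  have A3: "(\<Sum>k\<le>Suc ?m. (-1)^k * es (insert a T) k x * Y^(Suc ?m - k)) =
      Y^(Suc ?m) + (\<Sum>k\<le>?m. (-1)^(Suc k) * (?e (Suc k) + x a * ?e k) * Y^(?m - k))"
    by (subst sum.atMost_Suc_shift) (simp add: e0 eS)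
  have A4: "(\<Sum>k\<le>?m. (-1)^(Suc k) * (?e (Suc k) + x a * ?e k) * Y^(?m - k)) =
      (\<Sum>k\<le>?m. (-1)^(Suc k) * ?e (Suc k) * Y^(?m - k)) - x a * ?S"
    by (simp add: algebra_simps sum.distrib sum_distrib_left sum_negf sum_subtractf)
  show ?case using P YS A1 A2 A3 A4 cT by simp
qed

lemma es_count:
  assumes "finite T"
  shows "(\<Sum>b\<in>T. es (T-{b}) m x) = of_nat (card T - m) * es T m x"
  using assms
proof (induction T arbitrary: m rule: finite_induct)
  case empty
  then show ?case by simp
next
  case (insert a T)
  have sets: "\<And>b. b \<in> T \<Longrightarrow> insert a T - {b} = insert a (T - {b})" using insert by auto
  have finTb: "\<And>b. finite (T - {b})" using insert by simp
  have aTb: "\<And>b. a \<notin> T - {b}" using insert by simp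
  have L: "(\<Sum>b\<in>insert a T. es (insert a T - {b}) m x) = es T m x + (\<Sum>b\<in>T. es (insert a (T-{b})) m x)"
    using insert by (simp add: sets)
  show ?case
  proof (cases m)
    case 0
    then show ?thesis using L insert by (simp add: es_0)
  next
    case (Suc k)
    have "(\<Sum>b\<in>T. es (insert a (T-{b})) m x) = (\<Sum>b\<in>T. es (T-{b}) m x) + x a * (\<Sum>b\<in>T. es (T-{b}) k x)"
      unfolding Suc using es_insert[OF finTb aTb] by (simp add: sum.distrib sum_distrib_left)
    also have "\<dots> = of_nat (card T - m) * es T m x + x a * (of_nat (card T - k) * es T k x)"
      using insert.IH by simp
    finally have R: "(\<Sum>b\<in>T. es (insert a (T-{b})) m x) = of_nat (card T - m) * es T m x + x a * (of_nat (card T - k) * es T k x)" .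
    have E: "es (insert a T) m x = es T m x + x a * es T k x" unfolding Suc using es_insert[OF insert(1,2)] .
    have cT: "card (insert a T) - m = card T - k" using insert Suc by simp
    show ?thesis
    proof (cases "m \<le> card T")
      case True
      then have "of_nat (card T - k) = (1::complex) + of_nat (card T - m)" using Suc by (simp add: Suc_diff_le)
      then show ?thesis using L R E cT by (simp add: algebra_simps)
    next
      case False
      then have "es T m x = 0" using es_big[OF insert(1)] by simp
      then show ?thesis using L R E cT by (simp add: algebra_simps)
    qed
  qed
qed

lemma es_deriv:
  assumes "finite T" "\<And>d. d \<in> T \<Longrightarrow> ((\<lambda>t. f d t) has_field_derivative f' d) (at z)"
  shows "((\<lambda>t. es T m (\<lambda>i. f i t)) has_field_derivative
     (if m = 0 then 0 else (\<Sum>d\<in>T. f' d * es (T-{d}) (m-1) (\<lambda>i. f i z)))) (at z)"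
  using assms
proof (induction T arbitrary: m rule: finite_induct)
  case empty
  then show ?case by (cases m) (simp_all add: es_0 es_big)
next
  case (insert a T)
  have IH: "\<And>m. ((\<lambda>t. es T m (\<lambda>i. f i t)) has_field_derivative
     (if m = 0 then 0 else (\<Sum>d\<in>T. f' d * es (T-{d}) (m-1) (\<lambda>i. f i z)))) (at z)"
    using insert by blast
  have fa: "((\<lambda>t. f a t) has_field_derivative f' a) (at z)" using insert by blast
  show ?case
  proof (cases m)
    case 0
    then show ?thesis using insert by (simp add: es_0)
  next
    case (Suc k)
    have funeq: "(\<lambda>t. es (insert a T) m (\<lambda>i. f i t)) = (\<lambda>t. es T m (\<lambda>i. f i t) + f a t * es T k (\<lambda>i. f i t))"
      unfolding Suc using es_insert[OF insert(1,2)] by simp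
    have D: "((\<lambda>t. es T m (\<lambda>i. f i t) + f a t * es T k (\<lambda>i. f i t)) has_field_derivative
       (\<Sum>d\<in>T. f' d * es (T-{d}) k (\<lambda>i. f i z)) + (f' a * es T k (\<lambda>i. f i z) + f a z * (if k = 0 then 0 else (\<Sum>d\<in>T. f' d * es (T-{d}) (k-1) (\<lambda>i. f i z))))) (at z)"
      using IH[of m] IH[of k] fa unfolding Suc
      by (auto intro!: derivative_eq_intros)
    have sets: "\<And>b. b \<in> T \<Longrightarrow> insert a T - {b} = insert a (T - {b})" using insert by auto
    have finTb: "\<And>b. finite (T - {b})" using insert by simp
    have aTb: "\<And>b. a \<notin> T - {b}" using insert by simp
    have "(\<Sum>d\<in>insert a T. f' d * es (insert a T - {d}) k (\<lambda>i. f i z))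
        = f' a * es T k (\<lambda>i. f i z) + (\<Sum>d\<in>T. f' d * es (insert a (T - {d})) k (\<lambda>i. f i z))"
      using insert by (simp add: sets)
    also have "(\<Sum>d\<in>T. f' d * es (insert a (T - {d})) k (\<lambda>i. f i z)) =
       (\<Sum>d\<in>T. f' d * es (T-{d}) k (\<lambda>i. f i z)) + f a z * (if k = 0 then 0 else (\<Sum>d\<in>T. f' d * es (T-{d}) (k-1) (\<lambda>i. f i z)))"
    proof (cases k)
      case 0
      then show ?thesis using insert by (simp add: es_0)
    next
      case (Suc k')
      then show ?thesis using es_insert[OF finTb aTb]
        by (simp add: sum.distrib sum_distrib_left algebra_simps)
    qed
    finally have "(\<Sum>d\<in>insert a T. f' d * es (insert a T - {d}) (m-1) (\<lambda>i. f i z)) =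
       (\<Sum>d\<in>T. f' d * es (T-{d}) k (\<lambda>i. f i z)) + (f' a * es T k (\<lambda>i. f i z) + f a z * (if k = 0 then 0 else (\<Sum>d\<in>T. f' d * es (T-{d}) (k-1) (\<lambda>i. f i z))))"
      using Suc by simp
    then show ?thesis using D funeq Suc by simp
  qed
qed


definition repr :: "nat \<Rightarrow> ((nat \<Rightarrow> complex) \<Rightarrow> nat \<Rightarrow> complex) \<Rightarrow> bool" where
  "repr n F \<longleftrightarrow> (\<exists>a. \<forall>x. \<forall>c\<in>{1..n}. F x c =
      (\<Sum>r<n. \<Sum>m\<le>n. a r m * es {1..n} m x * es ({1..n}-{c}) r x))"

lemma repr_cong: "repr n F \<Longrightarrow> (\<And>x c. c \<in> {1..n} \<Longrightarrow> F x c = G x c) \<Longrightarrow> repr n G"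
proof -
  assume F: "repr n F" and FG: "\<And>x c. c \<in> {1..n} \<Longrightarrow> F x c = G x c"
  from F obtain a where a: "\<forall>x. \<forall>c\<in>{1..n}. F x c = (\<Sum>r<n. \<Sum>m\<le>n. a r m * es {1..n} m x * es ({1..n}-{c}) r x)"
    unfolding repr_def by blast
  show ?thesis unfolding repr_def
    by (rule exI[of _ a]) (use a FG in auto)
qed

lemma repr_add: "repr n F \<Longrightarrow> repr n G \<Longrightarrow> repr n (\<lambda>x c. F x c + G x c)"
proof -
  assume "repr n F" "repr n G"
  then obtain a b where a: "\<forall>x. \<forall>c\<in>{1..n}. F x c = (\<Sum>r<n. \<Sum>m\<le>n. a r m * es {1..n} m x * es ({1..n}-{c}) r x)"
    and b: "\<forall>x. \<forall>c\<in>{1..n}. G x c = (\<Sum>r<n. \<Sum>m\<le>n. b r m * es {1..n} m x * es ({1..n}-{c}) r x)"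
    unfolding repr_def by blast
  show ?thesis unfolding repr_def
    by (rule exI[of _ "\<lambda>r m. a r m + b r m"]) (simp add: a b algebra_simps sum.distrib)
qed

lemma repr_scale: "repr n F \<Longrightarrow> repr n (\<lambda>x c. k * F x c)"
proof -
  assume "repr n F"
  then obtain a where a: "\<forall>x. \<forall>c\<in>{1..n}. F x c = (\<Sum>r<n. \<Sum>m\<le>n. a r m * es {1..n} m x * es ({1..n}-{c}) r x)"
    unfolding repr_def by blast
  show ?thesis unfolding repr_def
    by (rule exI[of _ "\<lambda>r m. k * a r m"]) (simp add: a algebra_simps sum_distrib_left)
qed

lemma repr_neg: "repr n F \<Longrightarrow> repr n (\<lambda>x c. - F x c)"
  using repr_scale[of n F "-1"] by simp

lemma repr_diff: "repr n F \<Longrightarrow> repr n G \<Longrightarrow> repr n (\<lambda>x c. F x c - G x c)"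
  using repr_add[of n F "\<lambda>x c. - G x c"] repr_neg[of n G] by simp

lemma repr_zero: "repr n (\<lambda>x c. 0)"
  unfolding repr_def by (rule exI[of _ "\<lambda>r m. 0"]) simp

lemma repr_basic: "repr n (\<lambda>x c. es {1..n} m x * es ({1..n}-{c}) r x)"
proof (cases "r < n \<and> m \<le> n")
  case True
  show ?thesis unfolding repr_def
  proof (rule exI[of _ "\<lambda>r' m'. if r' = r \<and> m' = m then 1 else 0"], intro allI ballI)
    fix x c
    have "(\<Sum>r'<n. \<Sum>m'\<le>n. (if r' = r \<and> m' = m then 1 else 0) * es {1..n} m' x * es ({1..n}-{c}) r' x)
        = (\<Sum>r'<n. if r' = r then es {1..n} m x * es ({1..n}-{c}) r' x else 0)"
    proof (rule sum.cong)
      fix r' assume "r' \<in> {..<n}"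
      have "(\<Sum>m'\<le>n. (if r' = r \<and> m' = m then 1 else 0) * es {1..n} m' x * es ({1..n}-{c}) r' x)
          = (\<Sum>m'\<le>n. if m' = m then (if r' = r then es {1..n} m' x * es ({1..n}-{c}) r' x else 0) else 0)"
        by (rule sum.cong) auto
      also have "\<dots> = (if r' = r then es {1..n} m x * es ({1..n}-{c}) r' x else 0)"
        using True by (subst sum.delta) auto
      finally show "(\<Sum>m'\<le>n. (if r' = r \<and> m' = m then 1 else 0) * es {1..n} m' x * es ({1..n}-{c}) r' x)
          = (if r' = r then es {1..n} m x * es ({1..n}-{c}) r' x else 0)" .
    qed simp
    also have "\<dots> = es {1..n} m x * es ({1..n}-{c}) r x" using True by simp
    finally show "es {1..n} m x * es ({1..n}-{c}) r x = (\<Sum>r'<n. \<Sum>m'\<le>n. (if r' = r \<and> m' = m then 1 else 0) * es {1..n} m' x * es ({1..n}-{c}) r' x)"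
      by simp
  qed
next
  case False
  have "es {1..n} m x * es ({1..n}-{c}) r x = 0" if "c \<in> {1..n}" for x c
  proof (cases "r < n")
    case True
    then have "n < m" using False by simp
    then show ?thesis by (simp add: es_big)
  next
    case False
    have "card ({1..n}-{c}) = n - 1" using that by simp
    moreover have "1 \<le> n" using that by simp
    ultimately have "card ({1..n}-{c}) < r" using False by arith
    then show ?thesis by (simp add: es_big)
  qed
  note z = this
  show ?thesis by (rule repr_cong[OF repr_zero[of n]]) (rule z[symmetric])
qed

lemma repr_basic': "repr n (\<lambda>x c. k * es {1..n} m x * es ({1..n}-{c}) r x)"
  using repr_scale[OF repr_basic, of n k m r] by (simp add: mult.assoc)

definition Pp :: "nat \<Rightarrow> nat \<Rightarrow> nat \<Rightarrow> (nat \<Rightarrow> complex) \<Rightarrow> nat \<Rightarrow> complex" where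
  "Pp n m1 m2 x c = es ({1..n}-{c}) m1 x * es ({1..n}-{c}) m2 x"

lemma W_Suc: "c \<in> {1..n} \<Longrightarrow> es ({1..n}-{c}) (Suc m) x = es {1..n} (Suc m) x - x c * es ({1..n}-{c}) m x"
  using es_rec[of "{1..n}" c m x] by simp

lemma repr_Pp: "repr n (Pp n m1 m2)"
proof (induction m1 arbitrary: m2)
  case 0
  show ?case
    by (rule repr_cong[OF repr_basic[of n 0 m2]]) (simp add: Pp_def es_0)
next
  case (Suc m1)
  have "repr n (\<lambda>x c. (es {1..n} (Suc m1) x * es ({1..n}-{c}) m2 x - es {1..n} (Suc m2) x * es ({1..n}-{c}) m1 x)
      + Pp n m1 (Suc m2) x c)"
    by (intro repr_add repr_diff repr_basic Suc)
  then show ?case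
  proof (rule repr_cong)
    fix x c assume c: "c \<in> {1..n}"
    show "(es {1..n} (Suc m1) x * es ({1..n}-{c}) m2 x - es {1..n} (Suc m2) x * es ({1..n}-{c}) m1 x)
      + Pp n m1 (Suc m2) x c = Pp n (Suc m1) m2 x c"
      unfolding Pp_def W_Suc[OF c] by (simp add: algebra_simps)
  qed
qed

definition Rr :: "nat \<Rightarrow> nat \<Rightarrow> nat \<Rightarrow> (nat \<Rightarrow> complex) \<Rightarrow> nat \<Rightarrow> complex" where
  "Rr n m1 m2 x c = (\<Sum>b\<in>{1..n}-{c}. es ({1..n}-{b}) m1 x * es ({1..n}-{c}-{b}) m2 x)"

lemma repr_Rr: "repr n (Rr n m1 m2)"
proof (induction m1 arbitrary: m2)
  case 0
  show ?case
  proof (rule repr_cong[OF repr_basic'[of n "of_nat (n - 1 - m2)" 0 m2]])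
    fix x c assume c: "c \<in> {1..n}"
    have "Rr n 0 m2 x c = (\<Sum>b\<in>{1..n}-{c}. es ({1..n}-{c}-{b}) m2 x)"
      unfolding Rr_def by (simp add: es_0)
    also have "\<dots> = of_nat (card ({1..n}-{c}) - m2) * es ({1..n}-{c}) m2 x"
      by (rule es_count) simp
    finally show "of_nat (n - 1 - m2) * es {1..n} 0 x * es ({1..n}-{c}) m2 x = Rr n 0 m2 x c"
      using c by (simp add: es_0)
  qed
next
  case (Suc m1)
  have "repr n (\<lambda>x c. of_nat (n-1-m2) * es {1..n} (Suc m1) x * es ({1..n}-{c}) m2 x
      - of_nat (n - m1) * es {1..n} m1 x * es ({1..n}-{c}) (Suc m2) x
      + Pp n m1 (Suc m2) x c + Rr n m1 (Suc m2) x c)"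
    by (intro repr_add repr_diff repr_basic' Suc repr_Pp)
  then show ?case
  proof (rule repr_cong)
    fix x c assume c: "c \<in> {1..n}"
    let ?S = "{1..n}-{c}"
    let ?Q = "\<lambda>m b. es (?S-{b}) m x"
    let ?W = "\<lambda>m b. es ({1..n}-{b}) m x"
    let ?E = "\<lambda>m. es {1..n} m x"
    have finS: "finite ?S" by simp
    have h1: "\<And>b. b \<in> ?S \<Longrightarrow> ?W (Suc m1) b = ?E (Suc m1) - x b * ?W m1 b"
      using W_Suc by auto
    have h2: "\<And>b. b \<in> ?S \<Longrightarrow> x b * ?Q m2 b = ?W (Suc m2) c - ?Q (Suc m2) b"
      using es_rec[OF finS, of _ m2 x] by simp
    have cnt1: "(\<Sum>b\<in>?S. ?Q m2 b) = of_nat (n-1-m2) * ?W m2 c"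
      using es_count[OF finS, of m2 x] c by simp
    have cnt2: "(\<Sum>b\<in>{1..n}. ?W m1 b) = of_nat (n - m1) * ?E m1"
      using es_count[of "{1..n}" m1 x] by simp
    have cnt3: "(\<Sum>b\<in>?S. ?W m1 b) = of_nat (n - m1) * ?E m1 - ?W m1 c"
      using cnt2 sum.remove[of "{1..n}" c "\<lambda>b. ?W m1 b"] c by simp
    have "Rr n (Suc m1) m2 x c = (\<Sum>b\<in>?S. (?E (Suc m1) - x b * ?W m1 b) * ?Q m2 b)"
      unfolding Rr_def
    proof (rule sum.cong)
      fix b assume "b \<in> ?S"
      then show "?W (Suc m1) b * ?Q m2 b = (?E (Suc m1) - x b * ?W m1 b) * ?Q m2 b" using h1[of b] by simp
    qed simp
    also have "\<dots> = ?E (Suc m1) * (\<Sum>b\<in>?S. ?Q m2 b) - (\<Sum>b\<in>?S. ?W m1 b * (x b * ?Q m2 b))"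
      by (simp add: algebra_simps sum_subtractf sum_distrib_left)
    also have "(\<Sum>b\<in>?S. ?W m1 b * (x b * ?Q m2 b)) = (\<Sum>b\<in>?S. ?W m1 b * (?W (Suc m2) c - ?Q (Suc m2) b))"
    proof (rule sum.cong)
      fix b assume "b \<in> ?S"
      then show "?W m1 b * (x b * ?Q m2 b) = ?W m1 b * (?W (Suc m2) c - ?Q (Suc m2) b)" using h2[of b] by simp
    qed simp
    also have "\<dots> = ?W (Suc m2) c * (\<Sum>b\<in>?S. ?W m1 b) - Rr n m1 (Suc m2) x c"
      unfolding Rr_def by (simp add: algebra_simps sum_subtractf sum_distrib_left)
    finally show "of_nat (n-1-m2) * ?E (Suc m1) * ?W m2 c - of_nat (n - m1) * ?E m1 * ?W (Suc m2) c
      + Pp n m1 (Suc m2) x c + Rr n m1 (Suc m2) x c = Rr n (Suc m1) m2 x c"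
      unfolding cnt1 cnt3 Pp_def by (simp add: algebra_simps)
  qed
qed

definition Hm :: "nat \<Rightarrow> nat \<Rightarrow> nat \<Rightarrow> nat \<Rightarrow> (nat \<Rightarrow> complex) \<Rightarrow> complex" where
  "Hm n j c b x = (if b = c then 0 else if 2 \<le> j then es ({1..n}-{c}-{b}) (j-2) x else 0)"

definition Tt :: "nat \<Rightarrow> nat \<Rightarrow> nat \<Rightarrow> (nat \<Rightarrow> complex) \<Rightarrow> nat \<Rightarrow> complex" where
  "Tt n i j x c = (\<Sum>a\<in>{1..n}. \<Sum>b\<in>{1..n}. (if a = b then 0 else 4) * es ({1..n}-{a}) (i-1) x * Hm n j c b x)"

lemma Tt_split:
  "Tt n i j x c = 4 * (\<Sum>a\<in>{1..n}. es ({1..n}-{a}) (i-1) x) * (\<Sum>b\<in>{1..n}. Hm n j c b x)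
      - 4 * (\<Sum>b\<in>{1..n}. es ({1..n}-{b}) (i-1) x * Hm n j c b x)"
proof -
  let ?W = "\<lambda>a. es ({1..n}-{a}) (i-1) x"
  have "Tt n i j x c = (\<Sum>b\<in>{1..n}. \<Sum>a\<in>{1..n}. (if a = b then 0 else 4) * ?W a * Hm n j c b x)"
    unfolding Tt_def by (rule sum.swap)
  also have "\<dots> = (\<Sum>b\<in>{1..n}. (4 * (\<Sum>a\<in>{1..n}. ?W a) - 4 * ?W b) * Hm n j c b x)"
  proof (rule sum.cong)
    fix b assume b: "b \<in> {1..n}"
    have "(\<Sum>a\<in>{1..n}. (if a = b then 0 else 4) * ?W a * Hm n j c b x)
        = (\<Sum>a\<in>{1..n}. 4 * ?W a * Hm n j c b x - (if a = b then 4 * ?W a * Hm n j c b x else 0))"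
      by (rule sum.cong) auto
    also have "\<dots> = (\<Sum>a\<in>{1..n}. 4 * ?W a * Hm n j c b x) - 4 * ?W b * Hm n j c b x"
      using b by (simp only: sum_subtractf sum.delta finite_atLeastAtMost if_True)
    also have "\<dots> = (4 * (\<Sum>a\<in>{1..n}. ?W a) - 4 * ?W b) * Hm n j c b x"
      by (simp add: sum_distrib_left sum_distrib_right left_diff_distrib mult.assoc)
    finally show "(\<Sum>a\<in>{1..n}. (if a = b then 0 else 4) * ?W a * Hm n j c b x) = (4 * (\<Sum>a\<in>{1..n}. ?W a) - 4 * ?W b) * Hm n j c b x" .
  qed simp
  also have "\<dots> = 4 * (\<Sum>a\<in>{1..n}. ?W a) * (\<Sum>b\<in>{1..n}. Hm n j c b x) - 4 * (\<Sum>b\<in>{1..n}. ?W b * Hm n j c b x)"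
    by (simp add: left_diff_distrib sum_subtractf sum_distrib_left mult.assoc)
  finally show ?thesis .
qed

lemma repr_Tt: "repr n (Tt n i j)"
proof (cases "2 \<le> j")
  case False
  then have "Hm n j c b x = 0" for x c b unfolding Hm_def by simp
  then have z: "Tt n i j x c = 0" for x c unfolding Tt_def by simp
  show ?thesis by (rule repr_cong[OF repr_zero[of n]]) (simp add: z)
next
  case True
  define m2 where "m2 = j - 2"
  have "repr n (\<lambda>x c. (4 * of_nat (n - (i-1)) * of_nat (n-1-m2)) * es {1..n} (i-1) x * es ({1..n}-{c}) m2 x
     - 4 * Rr n (i-1) m2 x c)"
    by (intro repr_diff repr_basic' repr_scale repr_Rr)
  then show ?thesis
  proof (rule repr_cong)
    fix x c assume c: "c \<in> {1..n}"
    let ?S = "{1..n}-{c}"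
    have H1: "(\<Sum>b\<in>{1..n}. Hm n j c b x) = (\<Sum>b\<in>?S. es (?S-{b}) m2 x)"
      using c sum.remove[of "{1..n}" c "\<lambda>b. Hm n j c b x"]
      by (simp add: Hm_def True m2_def)
    also have "\<dots> = of_nat (n-1-m2) * es ?S m2 x"
      using es_count[of ?S m2 x] c by simp
    finally have H1: "(\<Sum>b\<in>{1..n}. Hm n j c b x) = of_nat (n-1-m2) * es ?S m2 x" .
    have H2: "(\<Sum>b\<in>{1..n}. es ({1..n}-{b}) (i-1) x * Hm n j c b x) = Rr n (i-1) m2 x c"
      using c sum.remove[of "{1..n}" c "\<lambda>b. es ({1..n}-{b}) (i-1) x * Hm n j c b x"]
      unfolding Rr_def by (simp add: Hm_def True m2_def)
    have H3: "(\<Sum>a\<in>{1..n}. es ({1..n}-{a}) (i-1) x) = of_nat (n - (i-1)) * es {1..n} (i-1) x"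
      using es_count[of "{1..n}" "i-1" x] by simp
    show "(4 * of_nat (n - (i-1)) * of_nat (n-1-m2)) * es {1..n} (i-1) x * es ({1..n}-{c}) m2 x
     - 4 * Rr n (i-1) m2 x c = Tt n i j x c"
      unfolding Tt_split H1 H2 H3 by (simp add: algebra_simps)
  qed
qed


lemma contr:
  fixes K Z :: "nat \<Rightarrow> complex" and P Q :: "nat \<Rightarrow> nat \<Rightarrow> complex"
  assumes "finite A" "finite B" "finite C"
  shows "(\<Sum>l\<in>A. (\<Sum>d\<in>B. K d * P l d) * (\<Sum>a\<in>C. Q a l * Z a)) = (\<Sum>d\<in>B. \<Sum>a\<in>C. K d * Z a * (\<Sum>l\<in>A. Q a l * P l d))"
proof -
  have "(\<Sum>l\<in>A. (\<Sum>d\<in>B. K d * P l d) * (\<Sum>a\<in>C. Q a l * Z a)) = (\<Sum>l\<in>A. \<Sum>a\<in>C. \<Sum>d\<in>B. K d * Z a * (Q a l * P l d))"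
    by (simp add: sum_distrib_left sum_distrib_right mult_ac)
  also have "\<dots> = (\<Sum>l\<in>A. \<Sum>d\<in>B. \<Sum>a\<in>C. K d * Z a * (Q a l * P l d))"
    by (rule sum.cong[OF refl], rule sum.swap)
  also have "\<dots> = (\<Sum>d\<in>B. \<Sum>l\<in>A. \<Sum>a\<in>C. K d * Z a * (Q a l * P l d))"
    by (rule sum.swap)
  also have "\<dots> = (\<Sum>d\<in>B. \<Sum>a\<in>C. \<Sum>l\<in>A. K d * Z a * (Q a l * P l d))"
    by (rule sum.cong[OF refl], rule sum.swap)
  also have "\<dots> = (\<Sum>d\<in>B. \<Sum>a\<in>C. K d * Z a * (\<Sum>l\<in>A. Q a l * P l d))"
    by (simp add: sum_distrib_left)
  finally show ?thesis .
qed

lemma delta_r: "finite A \<Longrightarrow> a \<in> A \<Longrightarrow> (\<Sum>d\<in>A. f d * (if a = d then 1 else 0)) = (f a :: complex)"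
  by (simp add: if_distrib[where f="\<lambda>z. _ * z"] cong: if_cong)

lemma delta_r': "finite A \<Longrightarrow> a \<in> A \<Longrightarrow> (\<Sum>d\<in>A. f d * (if d = a then 1 else 0)) = (f a :: complex)"
  by (simp add: if_distrib[where f="\<lambda>z. _ * z"] cong: if_cong)

lemma GG:
  fixes n :: nat
  assumes n2: "2 \<le> n" and c: "c \<in> {1..n}" and b: "b \<in> {1..n}"
  shows "(\<Sum>d\<in>{1..n}. (if c = d then 0 else 4) * ((1/(of_nat n - 1) - (if d = b then 1 else 0))/4)) = (if c = b then 1 else (0::complex))"
proof -
  have nz: "(of_nat n - 1 :: complex) \<noteq> 0"
  proof
    assume "(of_nat n - 1 :: complex) = 0"
    then have "(of_nat n :: complex) = of_nat 1" by simp
    then have "n = 1" using of_nat_eq_iff by blast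
    then show False using n2 by simp
  qed
  have "(\<Sum>d\<in>{1..n}. (if c = d then 0 else 4) * ((1/(of_nat n - 1) - (if d = b then 1 else 0))/4))
      = (\<Sum>d\<in>{1..n}. (1/(of_nat n - 1) - (if d = b then 1 else 0)) - (if d = c then (1/(of_nat n - 1) - (if d = b then 1 else 0)) else (0::complex)))"
    by (rule sum.cong) auto
  also have "\<dots> = (of_nat n * (1/(of_nat n - 1)) - 1) - (1/(of_nat n - 1) - (if c = b then 1 else 0))"
    using b c by (simp add: sum_subtractf)
  also have "\<dots> = (if c = b then 1 else 0)"
    using nz by (simp add: field_simps)
  finally show ?thesis .
qed

lemma contra_alg:
  fixes n :: nat and J M :: "nat \<Rightarrow> nat \<Rightarrow> complex" and H :: "nat \<Rightarrow> nat \<Rightarrow> nat \<Rightarrow> complex"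
    and gco :: "nat \<Rightarrow> nat \<Rightarrow> complex" and dg Nf :: "nat \<Rightarrow> nat \<Rightarrow> nat \<Rightarrow> complex"
  assumes n2: "2 \<le> n"
    and MJ: "\<And>a d. a \<in> {1..n} \<Longrightarrow> d \<in> {1..n} \<Longrightarrow> (\<Sum>l\<in>{1..n}. M a l * J l d) = (if a = d then 1 else 0)"
    and JM: "\<And>j i. j \<in> {1..n} \<Longrightarrow> i \<in> {1..n} \<Longrightarrow> (\<Sum>c\<in>{1..n}. J j c * M c i) = (if j = i then 1 else 0)"
    and Hs: "\<And>j c d. H j c d = H j d c"
    and gco: "\<And>j l. gco j l = (\<Sum>c\<in>{1..n}. \<Sum>d\<in>{1..n}. (if c = d then 0 else 4) * J j c * J l d)"
    and dg: "\<And>l k s. dg l k s = (\<Sum>a\<in>{1..n}. \<Sum>b\<in>{1..n}. ((1/(of_nat n - 1) - (if a = b then 1 else 0))/4) * (Nf a s l * M b k + M a l * Nf b s k))"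
    and Nf: "\<And>a s l. Nf a s l = - (\<Sum>j\<in>{1..n}. M a j * (\<Sum>c\<in>{1..n}. (\<Sum>d\<in>{1..n}. H j c d * M d s) * M c l))"
    and ijk: "i \<in> {1..n}" "j \<in> {1..n}" "k \<in> {1..n}"
  shows "- (\<Sum>s\<in>{1..n}. gco i s * (1/2 * (\<Sum>l\<in>{1..n}. gco j l * (dg l k s + dg l s k - dg s k l))))
     = (\<Sum>c\<in>{1..n}. (\<Sum>a\<in>{1..n}. \<Sum>b\<in>{1..n}. (if a = b then 0 else 4) * J i a * H j c b) * M c k)"
proof -
  let ?S = "{1..n}"
  define G :: "nat \<Rightarrow> nat \<Rightarrow> complex" where "G a b = ((1/(of_nat n - 1) - (if a = b then 1 else 0))/4 :: complex)" for a b
  define G' :: "nat \<Rightarrow> nat \<Rightarrow> complex" where "G' a b = ((if a = b then 0 else 4) :: complex)" for a b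
  have Gs: "G a b = G b a" for a b unfolding G_def by auto
  have inner_sym: "(\<Sum>c\<in>?S. (\<Sum>d\<in>?S. H j' c d * M d s) * M c l) = (\<Sum>c\<in>?S. (\<Sum>d\<in>?S. H j' c d * M d l) * M c s)" for j' s l
  proof -
    have "(\<Sum>c\<in>?S. (\<Sum>d\<in>?S. H j' c d * M d s) * M c l) = (\<Sum>c\<in>?S. \<Sum>d\<in>?S. H j' c d * M d s * M c l)"
      by (simp add: sum_distrib_right)
    also have "\<dots> = (\<Sum>d\<in>?S. \<Sum>c\<in>?S. H j' c d * M d s * M c l)" by (rule sum.swap)
    also have "\<dots> = (\<Sum>d\<in>?S. \<Sum>c\<in>?S. H j' d c * M c l * M d s)"
      by (simp add: Hs mult_ac)
    also have "\<dots> = (\<Sum>c\<in>?S. (\<Sum>d\<in>?S. H j' c d * M d l) * M c s)"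
      by (simp add: sum_distrib_right)
    finally show ?thesis .
  qed
  have Ns: "Nf a s l = Nf a l s" for a s l
    unfolding Nf using inner_sym by simp
  define A2 :: "nat \<Rightarrow> nat \<Rightarrow> nat \<Rightarrow> complex" where "A2 l s k = (\<Sum>a\<in>?S. \<Sum>b\<in>?S. G a b * (M a l * Nf b s k))" for l s k
  have dgsplit: "dg l k s = (\<Sum>a\<in>?S. \<Sum>b\<in>?S. G a b * (Nf a s l * M b k)) + A2 l s k" for l k s
    unfolding dg A2_def G_def[symmetric] by (simp add: distrib_left sum.distrib)
  have B: "(\<Sum>a\<in>?S. \<Sum>b\<in>?S. G a b * (Nf a k l * M b s)) = (\<Sum>a\<in>?S. \<Sum>b\<in>?S. G a b * (M a s * Nf b l k))" for l k s
  proof -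
    have "(\<Sum>a\<in>?S. \<Sum>b\<in>?S. G a b * (Nf a k l * M b s)) = (\<Sum>b\<in>?S. \<Sum>a\<in>?S. G a b * (Nf a k l * M b s))"
      by (rule sum.swap)
    also have "\<dots> = (\<Sum>a\<in>?S. \<Sum>b\<in>?S. G a b * (M a s * Nf b l k))"
      by (simp add: Gs Ns[of _ k l] mult_ac)
    finally show ?thesis .
  qed
  have dgsum: "dg l k s + dg l s k - dg s k l = 2 * A2 l s k" for l k s
  proof -
    have a: "A2 l k s = A2 l s k" unfolding A2_def by (simp only: Ns[of _ k s])
    have c: "(\<Sum>a\<in>?S. \<Sum>b\<in>?S. G a b * (Nf a l s * M b k)) = (\<Sum>a\<in>?S. \<Sum>b\<in>?S. G a b * (Nf a s l * M b k))"
      by (simp only: Ns[of _ l s])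
    have b: "(\<Sum>a\<in>?S. \<Sum>b\<in>?S. G a b * (Nf a k l * M b s)) = A2 s l k"
      unfolding A2_def by (rule B)
    show ?thesis unfolding dgsplit b a c by simp
  qed
  have K3: "(\<Sum>l\<in>?S. gco j' l * A2 l s k) = (\<Sum>c\<in>?S. J j' c * Nf c s k)" for j' s k
  proof -
    have g: "gco j' l = (\<Sum>d\<in>?S. (\<Sum>c\<in>?S. J j' c * G' c d) * J l d)" for l
      unfolding gco G'_def[symmetric]
      by (subst sum.swap) (simp add: sum_distrib_left sum_distrib_right mult_ac)
    have a: "A2 l s k = (\<Sum>a\<in>?S. M a l * (\<Sum>b\<in>?S. G a b * Nf b s k))" for l
      unfolding A2_def by (simp add: sum_distrib_left mult_ac)
    have "(\<Sum>l\<in>?S. gco j' l * A2 l s k) = (\<Sum>d\<in>?S. \<Sum>a\<in>?S. (\<Sum>c\<in>?S. J j' c * G' c d) * (\<Sum>b\<in>?S. G a b * Nf b s k) * (\<Sum>l\<in>?S. M a l * J l d))"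
      unfolding g a by (rule contr) simp_all
    also have "\<dots> = (\<Sum>d\<in>?S. (\<Sum>c\<in>?S. J j' c * G' c d) * (\<Sum>b\<in>?S. G d b * Nf b s k))"
    proof (rule sum.cong[OF refl])
      fix d assume d: "d \<in> ?S"
      have "(\<Sum>a\<in>?S. (\<Sum>c\<in>?S. J j' c * G' c d) * (\<Sum>b\<in>?S. G a b * Nf b s k) * (\<Sum>l\<in>?S. M a l * J l d))
          = (\<Sum>a\<in>?S. (\<Sum>c\<in>?S. J j' c * G' c d) * (\<Sum>b\<in>?S. G a b * Nf b s k) * (if a = d then 1 else 0))"
        by (rule sum.cong[OF refl], subst MJ) (use d in auto)
      also have "\<dots> = (\<Sum>c\<in>?S. J j' c * G' c d) * (\<Sum>b\<in>?S. G d b * Nf b s k)"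
        by (rule delta_r'[OF _ d]) simp
      finally show "(\<Sum>a\<in>?S. (\<Sum>c\<in>?S. J j' c * G' c d) * (\<Sum>b\<in>?S. G a b * Nf b s k) * (\<Sum>l\<in>?S. M a l * J l d))
          = (\<Sum>c\<in>?S. J j' c * G' c d) * (\<Sum>b\<in>?S. G d b * Nf b s k)" .
    qed
    also have "\<dots> = (\<Sum>c\<in>?S. \<Sum>b\<in>?S. J j' c * Nf b s k * (\<Sum>d\<in>?S. G d b * G' c d))"
      by (rule contr) simp_all
    also have "\<dots> = (\<Sum>c\<in>?S. \<Sum>b\<in>?S. J j' c * Nf b s k * (if c = b then 1 else 0))"
    proof (intro sum.cong refl)
      fix c b assume "c \<in> ?S" "b \<in> ?S"
      then have "(\<Sum>d\<in>?S. G d b * G' c d) = (if c = b then 1 else 0)"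
        using GG[OF n2, of c b] unfolding G_def G'_def by (simp add: mult_ac)
      then show "J j' c * Nf b s k * (\<Sum>d\<in>?S. G d b * G' c d) = J j' c * Nf b s k * (if c = b then 1 else 0)" by simp
    qed
    also have "\<dots> = (\<Sum>c\<in>?S. J j' c * Nf c s k)"
      by (rule sum.cong[OF refl], rule delta_r) auto
    finally show ?thesis .
  qed
  define X :: "nat \<Rightarrow> nat \<Rightarrow> nat \<Rightarrow> complex" where "X j' s k = (\<Sum>c\<in>?S. (\<Sum>d\<in>?S. H j' c d * M d s) * M c k)" for j' s k
  have K4: "(\<Sum>c\<in>?S. J j c * Nf c s k) = - X j s k" for s
  proof -
    have Nx: "Nf c s k = - (\<Sum>j'\<in>?S. M c j' * X j' s k)" for c unfolding Nf X_def ..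
    have "(\<Sum>c\<in>?S. J j c * Nf c s k) = - (\<Sum>c\<in>?S. \<Sum>j'\<in>?S. J j c * M c j' * X j' s k)"
      unfolding Nx by (simp add: sum_distrib_left sum_negf mult_ac)
    also have "\<dots> = - (\<Sum>j'\<in>?S. \<Sum>c\<in>?S. J j c * M c j' * X j' s k)"
      by (subst sum.swap) (rule refl)
    also have "\<dots> = - (\<Sum>j'\<in>?S. X j' s k * (\<Sum>c\<in>?S. J j c * M c j'))"
      by (simp add: sum_distrib_left mult_ac)
    also have "\<dots> = - (\<Sum>j'\<in>?S. X j' s k * (if j = j' then 1 else 0))"
      by (rule arg_cong[where f=uminus], rule sum.cong[OF refl], subst JM) (use ijk in auto)
    also have "\<dots> = - X j s k"
      by (rule arg_cong[where f=uminus], rule delta_r) (use ijk in auto)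
    finally show ?thesis .
  qed
  have "- (\<Sum>s\<in>?S. gco i s * (1/2 * (\<Sum>l\<in>?S. gco j l * (dg l k s + dg l s k - dg s k l))))
      = (\<Sum>s\<in>?S. gco i s * X j s k)"
  proof -
    have "(\<Sum>l\<in>?S. gco j l * (dg l k s + dg l s k - dg s k l)) = 2 * (\<Sum>l\<in>?S. gco j l * A2 l s k)" for s
      unfolding dgsum by (simp add: sum_distrib_left mult_ac)
    then show ?thesis using K3 K4 by (simp add: sum_negf)
  qed
  also have "\<dots> = (\<Sum>s\<in>?S. (\<Sum>b\<in>?S. (\<Sum>a\<in>?S. G' a b * J i a) * J s b) * (\<Sum>d\<in>?S. M d s * (\<Sum>c\<in>?S. H j c d * M c k)))"
  proof (rule sum.cong[OF refl])
    fix s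
    have g: "gco i s = (\<Sum>b\<in>?S. (\<Sum>a\<in>?S. G' a b * J i a) * J s b)"
      unfolding gco G'_def by (subst sum.swap) (simp add: sum_distrib_left sum_distrib_right mult_ac)
    have x: "X j s k = (\<Sum>d\<in>?S. M d s * (\<Sum>c\<in>?S. H j c d * M c k))"
      unfolding X_def by (simp add: sum_distrib_left sum_distrib_right mult_ac) (subst sum.swap, simp add: mult_ac)
    show "gco i s * X j s k = (\<Sum>b\<in>?S. (\<Sum>a\<in>?S. G' a b * J i a) * J s b) * (\<Sum>d\<in>?S. M d s * (\<Sum>c\<in>?S. H j c d * M c k))"
      unfolding g x ..
  qed
  also have "\<dots> = (\<Sum>b\<in>?S. \<Sum>d\<in>?S. (\<Sum>a\<in>?S. G' a b * J i a) * (\<Sum>c\<in>?S. H j c d * M c k) * (\<Sum>s\<in>?S. M d s * J s b))"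
    by (rule contr) simp_all
  also have "\<dots> = (\<Sum>b\<in>?S. (\<Sum>a\<in>?S. G' a b * J i a) * (\<Sum>c\<in>?S. H j c b * M c k))"
  proof (rule sum.cong[OF refl])
    fix b assume b: "b \<in> ?S"
    have "(\<Sum>d\<in>?S. (\<Sum>a\<in>?S. G' a b * J i a) * (\<Sum>c\<in>?S. H j c d * M c k) * (\<Sum>s\<in>?S. M d s * J s b))
        = (\<Sum>d\<in>?S. (\<Sum>a\<in>?S. G' a b * J i a) * (\<Sum>c\<in>?S. H j c d * M c k) * (if d = b then 1 else 0))"
      by (rule sum.cong[OF refl], subst MJ) (use b in auto)
    also have "\<dots> = (\<Sum>a\<in>?S. G' a b * J i a) * (\<Sum>c\<in>?S. H j c b * M c k)"
      by (rule delta_r'[OF _ b]) simp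
    finally show "(\<Sum>d\<in>?S. (\<Sum>a\<in>?S. G' a b * J i a) * (\<Sum>c\<in>?S. H j c d * M c k) * (\<Sum>s\<in>?S. M d s * J s b))
        = (\<Sum>a\<in>?S. G' a b * J i a) * (\<Sum>c\<in>?S. H j c b * M c k)" .
  qed
  also have "\<dots> = (\<Sum>c\<in>?S. (\<Sum>a\<in>?S. \<Sum>b\<in>?S. G' a b * J i a * H j c b) * M c k)"
  proof -
    have "(\<Sum>b\<in>?S. (\<Sum>a\<in>?S. G' a b * J i a) * (\<Sum>c\<in>?S. H j c b * M c k))
       = (\<Sum>b\<in>?S. \<Sum>c\<in>?S. \<Sum>a\<in>?S. G' a b * J i a * H j c b * M c k)"
      by (simp add: sum_distrib_left sum_distrib_right mult_ac)
    also have "\<dots> = (\<Sum>c\<in>?S. \<Sum>b\<in>?S. \<Sum>a\<in>?S. G' a b * J i a * H j c b * M c k)"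
      by (rule sum.swap)
    also have "\<dots> = (\<Sum>c\<in>?S. \<Sum>a\<in>?S. \<Sum>b\<in>?S. G' a b * J i a * H j c b * M c k)"
      by (rule sum.cong[OF refl], rule sum.swap)
    also have "\<dots> = (\<Sum>c\<in>?S. (\<Sum>a\<in>?S. \<Sum>b\<in>?S. G' a b * J i a * H j c b) * M c k)"
      by (simp add: sum_distrib_right)
    finally show ?thesis .
  qed
  finally show ?thesis unfolding G'_def .
qed


definition xx :: "((nat \<Rightarrow> complex) \<Rightarrow> (nat \<Rightarrow> complex)) \<Rightarrow> (nat \<Rightarrow> complex) \<Rightarrow> nat \<Rightarrow> complex" where
  "xx \<phi> w b = (\<phi> w b)^2"

definition Mx :: "nat \<Rightarrow> (nat \<Rightarrow> complex) \<Rightarrow> nat \<Rightarrow> nat \<Rightarrow> complex" where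
  "Mx n x a i = (-1)^(i+1) * x a ^ (n - i) / (\<Prod>b\<in>{1..n}-{a}. (x a - x b))"

lemma ubasic_es: "ubasic n k p = es {1..n} k (\<lambda>i. (p i)^2)"
  by (simp add: ubasic_def es_def)

lemma MJ_alg:
  assumes dist: "\<And>a b. a \<in> {1..n} \<Longrightarrow> b \<in> {1..n} \<Longrightarrow> a \<noteq> b \<Longrightarrow> x a \<noteq> x b"
    and a: "a \<in> {1..n}" and c: "c \<in> {1..n}"
  shows "(\<Sum>j\<in>{1..n}. Mx n x a j * es ({1..n}-{c}) (j-1) x) = (if a = c then 1 else 0)"
proof -
  let ?D = "\<Prod>b\<in>{1..n}-{a}. (x a - x b)"
  have D: "?D \<noteq> 0" using dist a by (auto simp: prod_zero_iff)
  have n1: "n = Suc (n - 1)" using a by simp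
  have cS: "card ({1..n}-{c}) = n - 1" using c by simp
  have "(\<Sum>j\<in>{1..n}. Mx n x a j * es ({1..n}-{c}) (j-1) x)
      = (\<Sum>j\<in>{1..n}. (-1)^(j+1) * x a ^ (n - j) * es ({1..n}-{c}) (j-1) x) / ?D"
    unfolding Mx_def by (simp add: sum_divide_distrib)
  also have "(\<Sum>j\<in>{1..n}. (-1)^(j+1) * x a ^ (n - j) * es ({1..n}-{c}) (j-1) x)
      = (\<Sum>k\<in>{0..n-1}. (-1)^(Suc k+1) * x a ^ (n - Suc k) * es ({1..n}-{c}) k x)"
  proof -
    have "{1..n} = {Suc 0..Suc (n-1)}" using n1 by simp
    then show ?thesis by (simp only: sum.shift_bounds_cl_Suc_ivl) simp
  qed
  also have "\<dots> = (\<Sum>k\<le>card ({1..n}-{c}). (-1)^k * es ({1..n}-{c}) k x * x a ^ (card ({1..n}-{c}) - k))"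
    unfolding cS atLeast0AtMost by (rule sum.cong) (simp_all add: mult_ac)
  also have "\<dots> = (\<Prod>b\<in>{1..n}-{c}. (x a - x b))"
    by (rule es_vieta[symmetric]) simp
  finally have E: "(\<Sum>j\<in>{1..n}. Mx n x a j * es ({1..n}-{c}) (j-1) x) = (\<Prod>b\<in>{1..n}-{c}. (x a - x b)) / ?D" .
  show ?thesis
  proof (cases "a = c")
    case True then show ?thesis using E D by simp
  next
    case False
    then have "(\<Prod>b\<in>{1..n}-{c}. (x a - x b)) = 0" using a by (intro prod_zero) auto
    then show ?thesis using E False by simp
  qed
qed

lemma pd_ubasic:
  assumes c: "c \<in> {1..n}" and i: "i \<in> {1..n}"
  shows "pd (ubasic n i) p c = 2 * p c * es ({1..n}-{c}) (i-1) (\<lambda>b. (p b)^2)"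
proof -
  let ?S = "{1..n}"
  let ?A = "es (?S-{c}) i (\<lambda>b. (p b)^2)"
  let ?B = "es (?S-{c}) (i-1) (\<lambda>b. (p b)^2)"
  have eq: "ubasic n i (p(c:=t)) = ?A + t^2 * ?B" for t
  proof -
    have "ubasic n i (p(c:=t)) = es ?S (Suc (i-1)) (\<lambda>b. ((p(c:=t)) b)^2)"
      unfolding ubasic_es using i by simp
    also have "\<dots> = es (?S-{c}) (Suc (i-1)) (\<lambda>b. ((p(c:=t)) b)^2) + t^2 * es (?S-{c}) (i-1) (\<lambda>b. ((p(c:=t)) b)^2)"
      using es_rec[of ?S c "i-1" "\<lambda>b. ((p(c:=t)) b)^2"] c by simp
    also have "es (?S-{c}) (Suc (i-1)) (\<lambda>b. ((p(c:=t)) b)^2) = ?A"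
    proof -
      have "Suc (i-1) = i" using i by simp
      moreover have "es (?S-{c}) k (\<lambda>b. ((p(c:=t)) b)^2) = es (?S-{c}) k (\<lambda>b. (p b)^2)" for k
        by (intro es_cong) auto
      ultimately show ?thesis by simp
    qed
    also have "es (?S-{c}) (i-1) (\<lambda>b. ((p(c:=t)) b)^2) = ?B"
      by (intro es_cong) auto
    finally show ?thesis .
  qed
  have "((\<lambda>t. ?A + t^2 * ?B) has_field_derivative 2 * p c * ?B) (at (p c))"
    by (auto intro!: derivative_eq_intros)
  then have "((\<lambda>t. ubasic n i (p(c:=t))) has_field_derivative 2 * p c * ?B) (at (p c))"
    unfolding eq .
  then show ?thesis unfolding pd_def by (rule DERIV_imp_deriv)
qed

definition NN :: "nat \<Rightarrow> (nat \<Rightarrow> complex) \<Rightarrow> nat \<Rightarrow> nat \<Rightarrow> nat \<Rightarrow> complex" where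
  "NN n x a s l = - (\<Sum>j\<in>{1..n}. Mx n x a j * (\<Sum>c\<in>{1..n}. (\<Sum>d\<in>{1..n}. Hm n j c d x * Mx n x d s) * Mx n x c l))"

context
  fixes n :: nat and V :: "(nat \<Rightarrow> complex) set" and \<phi> :: "(nat \<Rightarrow> complex) \<Rightarrow> (nat \<Rightarrow> complex)"
  assumes n2: "2 \<le> n" and gc: "generic_chart n V \<phi>"
begin

lemma chart_es: "w \<in> V \<Longrightarrow> k \<in> {1..n} \<Longrightarrow> es {1..n} k (xx \<phi> w) = w k"
proof -
  assume w: "w \<in> V" and k: "k \<in> {1..n}"
  have "umap n (\<phi> w) = w" using gc w unfolding generic_chart_def by blast
  then have "umap n (\<phi> w) k = w k" by simp
  then show ?thesis using k unfolding umap_def ubasic_es xx_def by simp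
qed

lemma chart_nz: "w \<in> V \<Longrightarrow> a \<in> {1..n} \<Longrightarrow> \<phi> w a \<noteq> 0"
  using gc unfolding generic_chart_def by blast

lemma chart_dist: "w \<in> V \<Longrightarrow> a \<in> {1..n} \<Longrightarrow> b \<in> {1..n} \<Longrightarrow> a \<noteq> b \<Longrightarrow> xx \<phi> w a \<noteq> xx \<phi> w b"
  using gc unfolding generic_chart_def xx_def by blast

lemma line_open:
  assumes v: "v \<in> V" and i: "i \<in> {1..n}"
  obtains T where "open T" "v i \<in> T" "\<And>t. t \<in> T \<Longrightarrow> v(i:=t) \<in> V"
    "\<And>a. continuous_on T (\<lambda>t. \<phi> (v(i:=t)) a)"
proof -
  from gc have "openin (top_of_set (Cn n)) V" "V \<subseteq> Cn n" "continuous_on V \<phi>"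
    unfolding generic_chart_def by blast+
  then obtain U where U: "open U" "V = Cn n \<inter> U" unfolding openin_open by blast
  let ?L = "\<lambda>t::complex. v(i:=t)"
  have Lc: "continuous_on UNIV ?L"
  proof (rule continuous_on_coordinatewise_then_product)
    fix k
    show "continuous_on UNIV (\<lambda>t. (v(i:=t)) k)"
      by (cases "k = i") (simp_all add: continuous_on_const continuous_on_id)
  qed
  define T where "T = ?L -` U"
  have oT: "open T" unfolding T_def using Lc U(1) continuous_on_open_vimage[of UNIV ?L] by simp
  have vC: "v \<in> Cn n" using v \<open>V \<subseteq> Cn n\<close> by blast
  have LC: "?L t \<in> Cn n" for t using vC i unfolding Cn_def by auto
  have TV: "t \<in> T \<Longrightarrow> v(i:=t) \<in> V" for t using LC U(2) unfolding T_def by blast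
  have vT: "v i \<in> T" unfolding T_def using v U(2) by simp
  have "continuous_on T (\<phi> \<circ> ?L)"
  proof (rule continuous_on_compose)
    show "continuous_on T ?L" using Lc continuous_on_subset by blast
    have "?L ` T \<subseteq> V" using TV by blast
    then show "continuous_on (?L ` T) \<phi>" using \<open>continuous_on V \<phi>\<close> continuous_on_subset by blast
  qed
  then have "continuous_on T (\<lambda>t. \<phi> (v(i:=t)) a)" for a
    using continuous_on_product_then_coordinatewise[of T "\<phi> \<circ> ?L" a] by (simp add: o_def)
  then show ?thesis using that oT vT TV by blast
qed

lemma x_deriv:
  assumes v: "v \<in> V" and i: "i \<in> {1..n}" and a: "a \<in> {1..n}"
  shows "((\<lambda>t. (\<phi> (v(i:=t)) a)^2) has_field_derivative Mx n (xx \<phi> v) a i) (at (v i))"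
proof -
  obtain T where T: "open T" "v i \<in> T" "\<And>t. t\<in>T \<Longrightarrow> v(i:=t) \<in> V"
    "\<And>a. continuous_on T (\<lambda>t. \<phi> (v(i:=t)) a)" using line_open[OF v i] by blast
  let ?S = "{1..n}"
  define X where "X b t = (\<phi> (v(i:=t)) b)^2" for b t
  define X0 where "X0 = xx \<phi> v"
  have X0v: "X b (v i) = X0 b" for b unfolding X_def X0_def xx_def by simp
  have xxX: "xx \<phi> (v(i:=t)) = (\<lambda>b. X b t)" for t unfolding X_def xx_def by (rule ext) simp
  have est: "es ?S k (\<lambda>b. X b t) = es ?S k X0 + (if k = i then t - v i else 0)" if t: "t \<in> T" and k: "k \<le> n" for t k
  proof (cases "k = 0")
    case True then show ?thesis using i by (simp add: es_0)
  next
    case False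
    then have kS: "k \<in> ?S" using k by simp
    have "es ?S k (\<lambda>b. X b t) = (v(i:=t)) k" using chart_es[OF T(3)[OF t] kS] xxX by simp
    moreover have "es ?S k X0 = v k" unfolding X0_def using chart_es[OF v kS] .
    ultimately show ?thesis by simp
  qed
  have poly: "(\<Prod>b\<in>?S. (Y - X b t)) = (\<Prod>b\<in>?S. (Y - X0 b)) + (-1)^i * (t - v i) * Y^(n-i)" if t: "t\<in>T" for t Y
  proof -
    have "(\<Prod>b\<in>?S. (Y - X b t)) = (\<Sum>k\<le>n. (-1)^k * es ?S k (\<lambda>b. X b t) * Y^(n-k))"
      using es_vieta[of ?S Y "\<lambda>b. X b t"] by simp
    also have "\<dots> = (\<Sum>k\<le>n. (-1)^k * es ?S k X0 * Y^(n-k) + (if k = i then (-1)^i * (t - v i) * Y^(n-i) else 0))"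
    proof (rule sum.cong[OF refl])
      fix k assume "k \<in> {..n}"
      then have k: "k \<le> n" by simp
      show "(-1)^k * es ?S k (\<lambda>b. X b t) * Y^(n-k) = (-1)^k * es ?S k X0 * Y^(n-k) + (if k = i then (-1)^i * (t - v i) * Y^(n-i) else 0)"
        by (subst est[OF t k]) (simp add: algebra_simps)
    qed
    also have "\<dots> = (\<Sum>k\<le>n. (-1)^k * es ?S k X0 * Y^(n-k)) + (-1)^i * (t - v i) * Y^(n-i)"
      using i by (simp add: sum.distrib)
    also have "(\<Sum>k\<le>n. (-1)^k * es ?S k X0 * Y^(n-k)) = (\<Prod>b\<in>?S. (Y - X0 b))"
      using es_vieta[of ?S Y X0] by simp
    finally show ?thesis .
  qed
  define den where "den t = (\<Prod>b\<in>?S-{a}. (X a t - X0 b))" for t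
  have key: "(X a t - X0 a) * den t = - ((-1)^i * (t - v i) * (X a t)^(n-i))" if t: "t \<in> T" for t
  proof -
    have z: "(\<Prod>b\<in>?S. (X a t - X b t)) = 0" using a by (intro prod_zero) auto
    have r: "(\<Prod>b\<in>?S. (X a t - X0 b)) = (X a t - X0 a) * den t"
      unfolding den_def using a by (simp add: prod.remove)
    have "0 = (X a t - X0 a) * den t + (-1)^i * (t - v i) * (X a t)^(n-i)"
      using poly[OF t, of "X a t"] unfolding z r .
    then show ?thesis by (simp add: eq_neg_iff_add_eq_0)
  qed
  have cX: "isCont (\<lambda>t. X b t) (v i)" for b
  proof -
    have "isCont (\<lambda>t. \<phi> (v(i:=t)) b) (v i)" using T(1,2,4) continuous_on_eq_continuous_at by blast
    then show ?thesis unfolding X_def by (intro continuous_intros)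
  qed
  have cden: "isCont den (v i)" unfolding den_def by (intro continuous_intros cX)
  have den0: "den (v i) \<noteq> 0"
  proof -
    have "X0 a - X0 b \<noteq> 0" if "b \<in> ?S-{a}" for b
      using chart_dist[OF v a, of b] that unfolding X0_def by auto
    then show ?thesis unfolding den_def X0v by (auto simp: prod_zero_iff)
  qed
  define g where "g t = - ((-1)^i * (X a t)^(n-i)) / den t" for t
  have cg: "isCont g (v i)" unfolding g_def by (intro continuous_intros cX cden den0)
  have gv: "g (v i) = Mx n X0 a i" unfolding g_def Mx_def den_def X0v by simp
  have ev: "eventually (\<lambda>t. (X a t - X a (v i)) / (t - v i) = g t) (at (v i))"
  proof -
    have e1: "eventually (\<lambda>t. t \<in> T) (at (v i))" by (rule eventually_at_in_open'[OF T(1,2)])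
    have "(den \<longlongrightarrow> den (v i)) (at (v i))" using cden by (simp add: isCont_def)
    then have e2: "eventually (\<lambda>t. den t \<noteq> 0) (at (v i))"
      using den0 by (rule tendsto_imp_eventually_ne)
    have e3: "eventually (\<lambda>t. t \<noteq> v i) (at (v i))" by (rule eventually_neq_at_within)
    show ?thesis using e1 e2 e3
    proof eventually_elim
      case (elim t)
      have k: "(X a t - X0 a) * den t = - ((-1)^i * (t - v i) * (X a t)^(n-i))" using key elim by blast
      have "t - v i \<noteq> 0" using elim by simp
      then show ?case using elim k unfolding g_def X0v by (simp add: field_simps)
    qed
  qed
  have "(g \<longlongrightarrow> Mx n X0 a i) (at (v i))" using cg gv by (simp add: isCont_def)
  then have "((\<lambda>t. (X a t - X a (v i)) / (t - v i)) \<longlongrightarrow> Mx n X0 a i) (at (v i))"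
    using tendsto_cong[OF ev] by simp
  then show ?thesis unfolding has_field_derivative_iff X_def X0_def by simp
qed

lemma p_deriv:
  assumes v: "v \<in> V" and i: "i \<in> {1..n}" and a: "a \<in> {1..n}"
  shows "((\<lambda>t. \<phi> (v(i:=t)) a) has_field_derivative Mx n (xx \<phi> v) a i / (2 * \<phi> v a)) (at (v i))"
proof -
  obtain T where T: "open T" "v i \<in> T" "\<And>t. t\<in>T \<Longrightarrow> v(i:=t) \<in> V"
    "\<And>a. continuous_on T (\<lambda>t. \<phi> (v(i:=t)) a)" using line_open[OF v i] by blast
  define q where "q t = \<phi> (v(i:=t)) a" for t
  define p0 where "p0 = \<phi> v a"
  have qv: "q (v i) = p0" unfolding q_def p0_def by simp
  have p0nz: "p0 \<noteq> 0" unfolding p0_def using chart_nz[OF v a] .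
  have xd: "((\<lambda>t. ((q t)^2 - p0^2) / (t - v i)) \<longlongrightarrow> Mx n (xx \<phi> v) a i) (at (v i))"
    using x_deriv[OF v i a] unfolding has_field_derivative_iff q_def p0_def by simp
  have cq: "isCont q (v i)" unfolding q_def using T(1,2,4) continuous_on_eq_continuous_at by blast
  then have tq: "(q \<longlongrightarrow> p0) (at (v i))" using qv by (simp add: isCont_def)
  have tq2: "((\<lambda>t. q t + p0) \<longlongrightarrow> 2 * p0) (at (v i))"
    using tendsto_add[OF tq tendsto_const[of p0]] by simp
  have lim: "((\<lambda>t. ((q t)^2 - p0^2) / (t - v i) / (q t + p0)) \<longlongrightarrow> Mx n (xx \<phi> v) a i / (2 * p0)) (at (v i))"
    using tendsto_divide[OF xd tq2] p0nz by simp
  have e2: "eventually (\<lambda>t. q t + p0 \<noteq> 0) (at (v i))"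
    using tq2 by (rule tendsto_imp_eventually_ne) (use p0nz in simp)
  have e3: "eventually (\<lambda>t. t \<noteq> v i) (at (v i))" by (rule eventually_neq_at_within)
  have ev: "eventually (\<lambda>t. ((q t)^2 - p0^2) / (t - v i) / (q t + p0) = (q t - q (v i)) / (t - v i)) (at (v i))"
    using e2 e3
  proof eventually_elim
    case (elim t)
    have f: "(q t)^2 - p0^2 = (q t - p0) * (q t + p0)" by (simp add: power2_eq_square algebra_simps)
    have "((q t)^2 - p0^2) / (t - v i) / (q t + p0) = ((q t - p0) * (q t + p0)) / ((t - v i) * (q t + p0))"
      unfolding f by (simp add: divide_divide_eq_left)
    also have "\<dots> = (q t - p0) / (t - v i)"
      using elim(1) by (rule nonzero_mult_divide_mult_cancel_right)
    finally show ?case unfolding qv .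
  qed
  have "((\<lambda>t. (q t - q (v i)) / (t - v i)) \<longlongrightarrow> Mx n (xx \<phi> v) a i / (2 * p0)) (at (v i))"
    using tendsto_cong[OF ev] lim by simp
  then show ?thesis unfolding has_field_derivative_iff q_def p0_def by simp
qed

lemma pd_phi:
  assumes v: "v \<in> V" and i: "i \<in> {1..n}" and a: "a \<in> {1..n}"
  shows "pd (\<lambda>w. \<phi> w a) v i = Mx n (xx \<phi> v) a i / (2 * \<phi> v a)"
  unfolding pd_def by (rule DERIV_imp_deriv) (use p_deriv[OF v i a] in simp)

lemma JM_at:
  assumes v: "v \<in> V" and j: "j \<in> {1..n}" and i: "i \<in> {1..n}"
  shows "(\<Sum>c\<in>{1..n}. es ({1..n}-{c}) (j-1) (xx \<phi> v) * Mx n (xx \<phi> v) c i) = (if j = i then 1 else 0)"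
proof -
  obtain T where T: "open T" "v i \<in> T" "\<And>t. t\<in>T \<Longrightarrow> v(i:=t) \<in> V"
    "\<And>a. continuous_on T (\<lambda>t. \<phi> (v(i:=t)) a)" using line_open[OF v i] by blast
  let ?S = "{1..n}"
  define X where "X b t = (\<phi> (v(i:=t)) b)^2" for b t
  have X0: "(\<lambda>b. X b (v i)) = xx \<phi> v" unfolding X_def xx_def by (rule ext) simp
  have xxX: "xx \<phi> (v(i:=t)) = (\<lambda>b. X b t)" for t unfolding X_def xx_def by (rule ext) simp
  have D1: "((\<lambda>t. es ?S j (\<lambda>b. X b t)) has_field_derivative
      (if j = 0 then 0 else (\<Sum>d\<in>?S. Mx n (xx \<phi> v) d i * es (?S-{d}) (j-1) (\<lambda>b. X b (v i))))) (at (v i))"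
    by (rule es_deriv) (use x_deriv[OF v i] in \<open>simp_all add: X_def\<close>)
  have ev: "eventually (\<lambda>t. es ?S j (\<lambda>b. X b t) = (if j = i then t else v j)) (nhds (v i))"
  proof -
    have "eventually (\<lambda>t. t \<in> T) (nhds (v i))" using T(1,2) by (rule eventually_nhds_in_open)
    then show ?thesis
    proof eventually_elim
      case (elim t)
      have "es ?S j (\<lambda>b. X b t) = (v(i:=t)) j" using chart_es[OF T(3)[OF elim] j] xxX by simp
      then show ?case by simp
    qed
  qed
  have D2: "((\<lambda>t. es ?S j (\<lambda>b. X b t)) has_field_derivative (if j = i then 1 else 0)) (at (v i))"
  proof -
    have "((\<lambda>t. if j = i then t else v j) has_field_derivative (if j = i then 1 else 0)) (at (v i))"
      by (cases "j = i") (simp_all add: DERIV_ident)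
    then show ?thesis using DERIV_cong_ev[OF refl ev refl] by simp
  qed
  have "(if j = 0 then 0 else (\<Sum>d\<in>?S. Mx n (xx \<phi> v) d i * es (?S-{d}) (j-1) (\<lambda>b. X b (v i)))) = (if j = i then 1 else 0)"
    using DERIV_unique[OF D1 D2] .
  then show ?thesis using j unfolding X0 by (simp add: mult.commute)
qed

lemma DERIV_cm2:
  "DERIV f x :> f' \<Longrightarrow> DERIV g x :> g' \<Longrightarrow> DERIV (\<lambda>t. (C::complex) * f t * g t) x :> C * (f' * g x + f x * g')"
  by (auto intro!: derivative_eq_intros simp: algebra_simps)

lemma aux_cancel: "(pa::complex) \<noteq> 0 \<Longrightarrow> pb \<noteq> 0 \<Longrightarrow> C * pa * pb * (A / (2*pa)) * (B / (2*pb)) = C/4 * A * B"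
  by (simp add: field_simps)

lemma gu_low_eq:
  assumes w: "w \<in> V" and l: "l \<in> {1..n}" and k: "k \<in> {1..n}"
  shows "gu_low n \<phi> w l k = (\<Sum>a\<in>{1..n}. \<Sum>b\<in>{1..n}.
     ((1/(of_nat n - 1) - (if a = b then 1 else 0))/4) * Mx n (xx \<phi> w) a l * Mx n (xx \<phi> w) b k)"
  unfolding gu_low_def
proof (intro sum.cong refl)
  fix a b assume a: "a \<in> {1..n}" and b: "b \<in> {1..n}"
  have pa: "\<phi> w a \<noteq> 0" and pb: "\<phi> w b \<noteq> 0" using chart_nz[OF w a] chart_nz[OF w b] .
  show "gp n (\<phi> w) a b * pd (\<lambda>w. \<phi> w a) w l * pd (\<lambda>w. \<phi> w b) w k =
    ((1/(of_nat n - 1) - (if a = b then 1 else 0))/4) * Mx n (xx \<phi> w) a l * Mx n (xx \<phi> w) b k"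
    unfolding pd_phi[OF w l a] pd_phi[OF w k b] gp_def using aux_cancel[OF pa pb] by simp
qed

lemma gcou_eq:
  assumes w: "w \<in> V" and i: "i \<in> {1..n}" and j: "j \<in> {1..n}"
  shows "gcou n (\<phi> w) i j = (\<Sum>c\<in>{1..n}. \<Sum>d\<in>{1..n}.
     (if c = d then 0 else 4) * es ({1..n}-{c}) (i-1) (xx \<phi> w) * es ({1..n}-{d}) (j-1) (xx \<phi> w))"
  unfolding gcou_def
proof (intro sum.cong refl)
  fix c d assume c: "c \<in> {1..n}" and d: "d \<in> {1..n}"
  have pc: "\<phi> w c \<noteq> 0" and pd': "\<phi> w d \<noteq> 0" using chart_nz[OF w c] chart_nz[OF w d] .
  have xx: "(\<lambda>b. (\<phi> w b)^2) = xx \<phi> w" unfolding xx_def ..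
  show "gcop (\<phi> w) c d * pd (ubasic n i) (\<phi> w) c * pd (ubasic n j) (\<phi> w) d =
     (if c = d then 0 else 4) * es ({1..n}-{c}) (i-1) (xx \<phi> w) * es ({1..n}-{d}) (j-1) (xx \<phi> w)"
    unfolding pd_ubasic[OF c i] pd_ubasic[OF d j] gcop_def xx using pc pd' by (simp add: field_simps)
qed

lemma M_diff:
  assumes v: "v \<in> V" and s: "s \<in> {1..n}" and a: "a \<in> {1..n}"
  shows "\<exists>D. ((\<lambda>t. Mx n (xx \<phi> (v(s:=t))) a l) has_field_derivative D) (at (v s))"
proof -
  let ?S = "{1..n}"
  have Xd: "((\<lambda>t. xx \<phi> (v(s:=t)) b) has_field_derivative Mx n (xx \<phi> v) b s) (at (v s))" if "b \<in> ?S" for b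
    using x_deriv[OF v s that] unfolding xx_def .
  have Pd: "((\<lambda>t. \<Prod>b\<in>?S-{a}. (xx \<phi> (v(s:=t)) a - xx \<phi> (v(s:=t)) b)) has_field_derivative
     (\<Sum>b\<in>?S-{a}. (Mx n (xx \<phi> v) a s - Mx n (xx \<phi> v) b s) * (\<Prod>y\<in>?S-{a}-{b}. (xx \<phi> (v(s:=v s)) a - xx \<phi> (v(s:=v s)) y)))) (at (v s))"
    by (rule has_field_derivative_prod) (intro DERIV_diff Xd a, simp)
  have P0: "(\<Prod>b\<in>?S-{a}. (xx \<phi> (v(s:=v s)) a - xx \<phi> (v(s:=v s)) b)) \<noteq> 0"
    using chart_dist[OF v a] by (auto simp: prod_zero_iff)
  have Fd: "((\<lambda>t. (-1)^(l+1) * (xx \<phi> (v(s:=t)) a)^(n-l)) has_field_derivative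
      (-1)^(l+1) * (of_nat (n-l) * (Mx n (xx \<phi> v) a s * (xx \<phi> (v(s:=v s)) a)^(n-l-Suc 0)))) (at (v s))"
    by (intro DERIV_cmult DERIV_power Xd a)
  show ?thesis unfolding Mx_def
    by (rule exI, rule DERIV_divide[OF Fd Pd P0])
qed

lemma Jp_conv:
  assumes c: "c \<in> {1..n}"
  shows "(if j - 1 = 0 then 0 else (\<Sum>d\<in>{1..n}-{c}. f d * es ({1..n}-{c}-{d}) (j-1-1) x))
     = (\<Sum>d\<in>{1..n}. Hm n j c d x * f d)"
proof (cases "2 \<le> j")
  case False
  then have "Hm n j c d x = 0" for d unfolding Hm_def by simp
  moreover have "j - 1 = 0" using False by simp
  ultimately show ?thesis by simp
next
  case True
  have "(\<Sum>d\<in>{1..n}. Hm n j c d x * f d) = Hm n j c c x * f c + (\<Sum>d\<in>{1..n}-{c}. Hm n j c d x * f d)"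
    using c by (simp add: sum.remove)
  also have "\<dots> = (\<Sum>d\<in>{1..n}-{c}. f d * es ({1..n}-{c}-{d}) (j-2) x)"
    unfolding Hm_def using True by (simp add: mult.commute)
  finally show ?thesis using True by (simp add: numeral_2_eq_2)
qed

lemma Md_eq:
  assumes v: "v \<in> V" and s: "s \<in> {1..n}" and a: "a \<in> {1..n}" and l: "l \<in> {1..n}"
  shows "deriv (\<lambda>t. Mx n (xx \<phi> (v(s:=t))) a l) (v s) = NN n (xx \<phi> v) a s l"
proof -
  let ?S = "{1..n}"
  define X0 where "X0 = xx \<phi> v"
  define M where "M = Mx n X0"
  define J where "J j c = es (?S-{c}) (j-1) X0" for j c
  define Md where "Md c l' = deriv (\<lambda>t. Mx n (xx \<phi> (v(s:=t))) c l') (v s)" for c l'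
  have vs: "v(s := v s) = v" by simp
  have MdD: "DERIV (\<lambda>t. Mx n (xx \<phi> (v(s:=t))) c l') (v s) :> Md c l'" if "c \<in> ?S" for c l'
    unfolding Md_def using M_diff[OF v s that, of l'] DERIV_deriv_iff_has_field_derivative by blast
  have Jd: "DERIV (\<lambda>t. es (?S-{c}) (j-1) (xx \<phi> (v(s:=t)))) (v s) :> (\<Sum>d\<in>?S. Hm n j c d X0 * M d s)"
    if c: "c \<in> ?S" for c j
  proof -
    have "((\<lambda>t. es (?S-{c}) (j-1) (\<lambda>i. xx \<phi> (v(s:=t)) i)) has_field_derivative
      (if j - 1 = 0 then 0 else (\<Sum>d\<in>?S-{c}. M d s * es (?S-{c}-{d}) (j-1-1) (\<lambda>i. xx \<phi> (v(s:=v s)) i)))) (at (v s))"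
      by (rule es_deriv) (use x_deriv[OF v s] in \<open>auto simp: M_def X0_def xx_def\<close>)
    then show ?thesis unfolding vs Jp_conv[OF c] X0_def by simp
  qed
  have zero: "(\<Sum>c\<in>?S. (\<Sum>d\<in>?S. Hm n j c d X0 * M d s) * M c l' + Md c l' * J j c) = 0"
    if j: "j \<in> ?S" and l': "l' \<in> ?S" for j l'
  proof -
    let ?F = "\<lambda>t. \<Sum>c\<in>?S. es (?S-{c}) (j-1) (xx \<phi> (v(s:=t))) * Mx n (xx \<phi> (v(s:=t))) c l'"
    have Dc: "DERIV (\<lambda>t. es (?S-{c}) (j-1) (xx \<phi> (v(s:=t))) * Mx n (xx \<phi> (v(s:=t))) c l') (v s) :>
        (\<Sum>d\<in>?S. Hm n j c d X0 * M d s) * M c l' + Md c l' * J j c" if c: "c \<in> ?S" for c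
    proof -
      have "DERIV (\<lambda>t. es (?S-{c}) (j-1) (xx \<phi> (v(s:=t))) * Mx n (xx \<phi> (v(s:=t))) c l') (v s) :>
        (\<Sum>d\<in>?S. Hm n j c d X0 * M d s) * Mx n (xx \<phi> (v(s:=v s))) c l' + Md c l' * es (?S-{c}) (j-1) (xx \<phi> (v(s:=v s)))"
        by (rule DERIV_mult[OF Jd[OF c] MdD[OF c]])
      then show ?thesis unfolding vs M_def J_def X0_def .
    qed
    have D1: "DERIV ?F (v s) :> (\<Sum>c\<in>?S. (\<Sum>d\<in>?S. Hm n j c d X0 * M d s) * M c l' + Md c l' * J j c)"
      using DERIV_sum[where S="?S" and f="\<lambda>t c. es (?S-{c}) (j-1) (xx \<phi> (v(s:=t))) * Mx n (xx \<phi> (v(s:=t))) c l'"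
        and f'="\<lambda>c. (\<Sum>d\<in>?S. Hm n j c d X0 * M d s) * M c l' + Md c l' * J j c" and F="at (v s)", OF Dc] by simp
    obtain T where T: "open T" "v s \<in> T" "\<And>t. t\<in>T \<Longrightarrow> v(s:=t) \<in> V"
      "\<And>a. continuous_on T (\<lambda>t. \<phi> (v(s:=t)) a)" using line_open[OF v s] by blast
    have ev: "eventually (\<lambda>t. ?F t = (if j = l' then 1 else 0)) (nhds (v s))"
    proof -
      have "eventually (\<lambda>t. t \<in> T) (nhds (v s))" using T(1,2) by (rule eventually_nhds_in_open)
      then show ?thesis
      proof eventually_elim
        case (elim t)
        show ?case using JM_at[OF T(3)[OF elim] j l'] .
      qed
    qed
    have "DERIV ?F (v s) :> 0"
      using DERIV_cong_ev[OF refl ev refl] by simp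
    then show ?thesis using DERIV_unique[OF D1] by simp
  qed
  have dist: "\<And>a b. a \<in> ?S \<Longrightarrow> b \<in> ?S \<Longrightarrow> a \<noteq> b \<Longrightarrow> X0 a \<noteq> X0 b"
    unfolding X0_def using chart_dist[OF v] by blast
  have "Md a l = (\<Sum>c\<in>?S. Md c l * (if a = c then 1 else 0))"
    using a by (simp add: if_distrib[where f="\<lambda>z. _ * z"] cong: if_cong)
  also have "\<dots> = (\<Sum>c\<in>?S. Md c l * (\<Sum>j\<in>?S. M a j * J j c))"
    unfolding M_def J_def using MJ_alg[OF dist a] by simp
  also have "\<dots> = (\<Sum>j\<in>?S. M a j * (\<Sum>c\<in>?S. Md c l * J j c))"
    by (simp add: sum_distrib_left sum_distrib_right mult_ac) (rule sum.swap)
  also have "\<dots> = (\<Sum>j\<in>?S. M a j * (- (\<Sum>c\<in>?S. (\<Sum>d\<in>?S. Hm n j c d X0 * M d s) * M c l)))"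
  proof (rule sum.cong[OF refl])
    fix j assume j: "j \<in> ?S"
    have "(\<Sum>c\<in>?S. Md c l * J j c) = - (\<Sum>c\<in>?S. (\<Sum>d\<in>?S. Hm n j c d X0 * M d s) * M c l)"
      using zero[OF j l] by (simp add: sum.distrib eq_neg_iff_add_eq_0 add.commute)
    then show "M a j * (\<Sum>c\<in>?S. Md c l * J j c) = M a j * (- (\<Sum>c\<in>?S. (\<Sum>d\<in>?S. Hm n j c d X0 * M d s) * M c l))"
      by simp
  qed
  also have "\<dots> = NN n (xx \<phi> v) a s l"
    unfolding NN_def M_def X0_def by (simp add: sum_negf)
  finally show ?thesis unfolding Md_def .
qed

lemma dg_eq:
  assumes v: "v \<in> V" and l: "l \<in> {1..n}" and k: "k \<in> {1..n}" and s: "s \<in> {1..n}"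
  shows "pd (\<lambda>w. gu_low n \<phi> w l k) v s = (\<Sum>a\<in>{1..n}. \<Sum>b\<in>{1..n}.
     ((1/(of_nat n - 1) - (if a = b then 1 else 0))/4) *
     (NN n (xx \<phi> v) a s l * Mx n (xx \<phi> v) b k + Mx n (xx \<phi> v) a l * NN n (xx \<phi> v) b s k))"
proof -
  let ?S = "{1..n}"
  let ?G = "\<lambda>a b. ((1/(of_nat n - 1) - (if a = b then 1 else 0))/4) :: complex"
  have vs: "v(s := v s) = v" by simp
  have MD: "DERIV (\<lambda>t. Mx n (xx \<phi> (v(s:=t))) c l') (v s) :> NN n (xx \<phi> v) c s l'"
    if "c \<in> ?S" "l' \<in> ?S" for c l'
    using M_diff[OF v s that(1), of l'] Md_eq[OF v s that] DERIV_deriv_iff_has_field_derivative by metis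
  let ?gl = "\<lambda>t. \<Sum>a\<in>?S. \<Sum>b\<in>?S. ?G a b * Mx n (xx \<phi> (v(s:=t))) a l * Mx n (xx \<phi> (v(s:=t))) b k"
  have Dab: "DERIV (\<lambda>t. ?G a b * Mx n (xx \<phi> (v(s:=t))) a l * Mx n (xx \<phi> (v(s:=t))) b k) (v s) :>
      ?G a b * (NN n (xx \<phi> v) a s l * Mx n (xx \<phi> v) b k + Mx n (xx \<phi> v) a l * NN n (xx \<phi> v) b s k)"
    if a: "a \<in> ?S" and b: "b \<in> ?S" for a b
    using DERIV_cm2[OF MD[OF a l] MD[OF b k], of "?G a b"] unfolding vs .
  have Da: "DERIV (\<lambda>t. \<Sum>b\<in>?S. ?G a b * Mx n (xx \<phi> (v(s:=t))) a l * Mx n (xx \<phi> (v(s:=t))) b k) (v s) :>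
      (\<Sum>b\<in>?S. ?G a b * (NN n (xx \<phi> v) a s l * Mx n (xx \<phi> v) b k + Mx n (xx \<phi> v) a l * NN n (xx \<phi> v) b s k))"
    if a: "a \<in> ?S" for a
    using DERIV_sum[where S="?S" and f="\<lambda>t b. ?G a b * Mx n (xx \<phi> (v(s:=t))) a l * Mx n (xx \<phi> (v(s:=t))) b k"
       and f'="\<lambda>b. ?G a b * (NN n (xx \<phi> v) a s l * Mx n (xx \<phi> v) b k + Mx n (xx \<phi> v) a l * NN n (xx \<phi> v) b s k)"
       and F="at (v s)", OF Dab[OF a]] by simp
  have D1: "DERIV ?gl (v s) :> (\<Sum>a\<in>?S. \<Sum>b\<in>?S. ?G a b *
     (NN n (xx \<phi> v) a s l * Mx n (xx \<phi> v) b k + Mx n (xx \<phi> v) a l * NN n (xx \<phi> v) b s k))"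
    using DERIV_sum[where S="?S" and f="\<lambda>t a. \<Sum>b\<in>?S. ?G a b * Mx n (xx \<phi> (v(s:=t))) a l * Mx n (xx \<phi> (v(s:=t))) b k"
       and f'="\<lambda>a. \<Sum>b\<in>?S. ?G a b * (NN n (xx \<phi> v) a s l * Mx n (xx \<phi> v) b k + Mx n (xx \<phi> v) a l * NN n (xx \<phi> v) b s k)"
       and F="at (v s)", OF Da] by simp
  obtain T where T: "open T" "v s \<in> T" "\<And>t. t\<in>T \<Longrightarrow> v(s:=t) \<in> V"
      "\<And>a. continuous_on T (\<lambda>t. \<phi> (v(s:=t)) a)" using line_open[OF v s] by blast
  have ev: "eventually (\<lambda>t. gu_low n \<phi> (v(s:=t)) l k = ?gl t) (nhds (v s))"
  proof -
    have "eventually (\<lambda>t. t \<in> T) (nhds (v s))" using T(1,2) by (rule eventually_nhds_in_open)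
    then show ?thesis
    proof eventually_elim
      case (elim t)
      show ?case using gu_low_eq[OF T(3)[OF elim] l k] .
    qed
  qed
  have "DERIV (\<lambda>t. gu_low n \<phi> (v(s:=t)) l k) (v s) :> (\<Sum>a\<in>?S. \<Sum>b\<in>?S. ?G a b *
     (NN n (xx \<phi> v) a s l * Mx n (xx \<phi> v) b k + Mx n (xx \<phi> v) a l * NN n (xx \<phi> v) b s k))"
    using DERIV_cong_ev[OF refl ev refl] D1 by simp
  then show ?thesis unfolding pd_def by (rule DERIV_imp_deriv)
qed

end


lemma Hm_sym: "Hm n j c d x = Hm n j d c x"
proof -
  have "{1..n} - {c} - {d} = {1..n} - {d} - {c}" by blast
  then show ?thesis unfolding Hm_def by auto
qed

lemma contra_T:
  assumes n2: "2 \<le> n" and gc: "generic_chart n V \<phi>" and v: "v \<in> V"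
    and i: "i \<in> {1..n}" and j: "j \<in> {1..n}" and k: "k \<in> {1..n}"
  shows "contra n \<phi> v i j k = (\<Sum>c\<in>{1..n}. Tt n i j (xx \<phi> v) c * Mx n (xx \<phi> v) c k)"
proof -
  let ?S = "{1..n}"
  define X0 where "X0 = xx \<phi> v"
  define gco where "gco j l = (\<Sum>c\<in>?S. \<Sum>d\<in>?S. (if c = d then 0 else 4) * es (?S-{c}) (j-1) X0 * es (?S-{d}) (l-1) X0)" for j l
  define dg where "dg l k s = (\<Sum>a\<in>?S. \<Sum>b\<in>?S. ((1/(of_nat n - 1) - (if a = b then 1 else 0))/4) *
     (NN n X0 a s l * Mx n X0 b k + Mx n X0 a l * NN n X0 b s k))" for l k s
  have g: "gcou n (\<phi> v) j' l = gco j' l" if "j' \<in> ?S" "l \<in> ?S" for j' l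
    unfolding gco_def X0_def using gcou_eq[OF n2 gc v that] .
  have d: "pd (\<lambda>w. gu_low n \<phi> w l k') v s = dg l k' s" if "l \<in> ?S" "k' \<in> ?S" "s \<in> ?S" for l k' s
    unfolding dg_def X0_def using dg_eq[OF n2 gc v that] .
  have "contra n \<phi> v i j k = - (\<Sum>s\<in>?S. gco i s * (1/2 * (\<Sum>l\<in>?S. gco j l * (dg l k s + dg l s k - dg s k l))))"
  proof -
    have ch: "christ n \<phi> v j s k = 1/2 * (\<Sum>l\<in>?S. gco j l * (dg l k s + dg l s k - dg s k l))" if s: "s \<in> ?S" for s
      unfolding christ_def
    proof (rule arg_cong[where f="\<lambda>z. 1/2 * z"], rule sum.cong[OF refl])
      fix l assume l: "l \<in> ?S"
      show "gcou n (\<phi> (v)) j l * (pd (\<lambda>w. gu_low n \<phi> w l k) v s + pd (\<lambda>w. gu_low n \<phi> w l s) v k - pd (\<lambda>w. gu_low n \<phi> w s k) v l)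
        = gco j l * (dg l k s + dg l s k - dg s k l)"
        by (simp only: g[OF j l] d[OF l k s] d[OF l s k] d[OF s k l])
    qed
    show ?thesis unfolding contra_def
    proof (rule arg_cong[where f=uminus], rule sum.cong[OF refl])
      fix s assume s: "s \<in> ?S"
      show "gcou n (\<phi> v) i s * christ n \<phi> v j s k = gco i s * (1/2 * (\<Sum>l\<in>?S. gco j l * (dg l k s + dg l s k - dg s k l)))"
        by (simp only: g[OF i s] ch[OF s])
    qed
  qed
  also have "\<dots> = (\<Sum>c\<in>?S. (\<Sum>a\<in>?S. \<Sum>b\<in>?S. (if a = b then 0 else 4) * es (?S-{a}) (i-1) X0 * Hm n j c b X0) * Mx n X0 c k)"
  proof (rule contra_alg[where J="\<lambda>j c. es (?S-{c}) (j-1) X0" and M="Mx n X0" and H="\<lambda>j c d. Hm n j c d X0"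
        and Nf="NN n X0"])
    show "2 \<le> n" by (rule n2)
    show "\<And>a d. a \<in> ?S \<Longrightarrow> d \<in> ?S \<Longrightarrow> (\<Sum>l\<in>?S. Mx n X0 a l * es (?S-{d}) (l-1) X0) = (if a = d then 1 else 0)"
      unfolding X0_def by (rule MJ_alg) (use chart_dist[OF n2 gc v] in auto)
    show "\<And>j i. j \<in> ?S \<Longrightarrow> i \<in> ?S \<Longrightarrow> (\<Sum>c\<in>?S. es (?S-{c}) (j-1) X0 * Mx n X0 c i) = (if j = i then 1 else 0)"
      unfolding X0_def by (rule JM_at[OF n2 gc v])
    show "\<And>j c d. Hm n j c d X0 = Hm n j d c X0" by (rule Hm_sym)
    show "\<And>j l. gco j l = (\<Sum>c\<in>?S. \<Sum>d\<in>?S. (if c = d then 0 else 4) * es (?S-{c}) (j-1) X0 * es (?S-{d}) (l-1) X0)"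
      by (rule gco_def)
    show "\<And>l k s. dg l k s = (\<Sum>a\<in>?S. \<Sum>b\<in>?S. ((1/(of_nat n - 1) - (if a = b then 1 else 0))/4) * (NN n X0 a s l * Mx n X0 b k + Mx n X0 a l * NN n X0 b s k))"
      by (rule dg_def)
    show "\<And>a s l. NN n X0 a s l = - (\<Sum>j\<in>?S. Mx n X0 a j * (\<Sum>c\<in>?S. (\<Sum>d\<in>?S. Hm n j c d X0 * Mx n X0 d s) * Mx n X0 c l))"
      by (rule NN_def)
  qed (use i j k in auto)
  finally show ?thesis unfolding Tt_def X0_def .
qed

lemma contra_lin:
  assumes n2: "2 \<le> n" and gc: "generic_chart n V \<phi>" and v: "v \<in> V"
    and i: "i \<in> {1..n}" and j: "j \<in> {1..n}" and k: "k \<in> {1..n}"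
    and rep: "\<forall>x. \<forall>c\<in>{1..n}. Tt n i j x c = (\<Sum>r<n. \<Sum>m\<le>n. a r m * es {1..n} m x * es ({1..n}-{c}) r x)"
  shows "contra n \<phi> v i j k = a (k-1) 0 + (\<Sum>m\<in>{1..n}. a (k-1) m * v m)"
proof -
  let ?S = "{1..n}"
  define X0 where "X0 = xx \<phi> v"
  let ?E = "\<lambda>m. es ?S m X0"
  let ?W = "\<lambda>r c. es (?S-{c}) r X0"
  let ?M = "\<lambda>c. Mx n X0 c k"
  have "contra n \<phi> v i j k = (\<Sum>c\<in>?S. Tt n i j X0 c * ?M c)"
    unfolding X0_def by (rule contra_T[OF n2 gc v i j k])
  also have "\<dots> = (\<Sum>c\<in>?S. (\<Sum>r<n. \<Sum>m\<le>n. a r m * ?E m * ?W r c) * ?M c)"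
    using rep by simp
  also have "\<dots> = (\<Sum>c\<in>?S. \<Sum>r<n. (\<Sum>m\<le>n. a r m * ?E m) * (?W r c * ?M c))"
    by (simp add: sum_distrib_left sum_distrib_right mult_ac)
  also have "\<dots> = (\<Sum>r<n. \<Sum>c\<in>?S. (\<Sum>m\<le>n. a r m * ?E m) * (?W r c * ?M c))"
    by (rule sum.swap)
  also have "\<dots> = (\<Sum>r<n. (\<Sum>m\<le>n. a r m * ?E m) * (\<Sum>c\<in>?S. ?W r c * ?M c))"
    by (simp add: sum_distrib_left)
  also have "\<dots> = (\<Sum>r<n. (\<Sum>m\<le>n. a r m * ?E m) * (if Suc r = k then 1 else 0))"
  proof (rule sum.cong[OF refl])
    fix r assume "r \<in> {..<n}"
    then have r: "Suc r \<in> ?S" by simp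
    have "(\<Sum>c\<in>?S. ?W r c * ?M c) = (\<Sum>c\<in>?S. es (?S-{c}) (Suc r - 1) (xx \<phi> v) * Mx n (xx \<phi> v) c k)"
      unfolding X0_def by simp
    also have "\<dots> = (if Suc r = k then 1 else 0)" by (rule JM_at[OF n2 gc v r k])
    finally show "(\<Sum>m\<le>n. a r m * ?E m) * (\<Sum>c\<in>?S. ?W r c * ?M c) = (\<Sum>m\<le>n. a r m * ?E m) * (if Suc r = k then 1 else 0)"
      by simp
  qed
  also have "\<dots> = (\<Sum>m\<le>n. a (k-1) m * ?E m)"
  proof -
    have k1: "k - 1 \<in> {..<n}" "Suc (k-1) = k" using k by auto
    have "(\<Sum>r<n. (\<Sum>m\<le>n. a r m * ?E m) * (if Suc r = k then 1 else 0)) = (\<Sum>r<n. if r = k - 1 then (\<Sum>m\<le>n. a r m * ?E m) else 0)"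
      by (rule sum.cong[OF refl]) (use k in auto)
    also have "\<dots> = (\<Sum>m\<le>n. a (k-1) m * ?E m)" using k1 by simp
    finally show ?thesis .
  qed
  also have "\<dots> = a (k-1) 0 + (\<Sum>m\<in>?S. a (k-1) m * v m)"
  proof -
    have "{..n} = insert 0 ?S" by auto
    then have "(\<Sum>m\<le>n. a (k-1) m * ?E m) = a (k-1) 0 * ?E 0 + (\<Sum>m\<in>?S. a (k-1) m * ?E m)"
      by simp
    moreover have "?E 0 = 1" by (simp add: es_0)
    moreover have "(\<Sum>m\<in>?S. a (k-1) m * ?E m) = (\<Sum>m\<in>?S. a (k-1) m * v m)"
    proof (rule sum.cong[OF refl])
      fix m assume m: "m \<in> ?S"
      show "a (k-1) m * ?E m = a (k-1) m * v m" unfolding X0_def chart_es[OF n2 gc v m] ..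
    qed
    ultimately show ?thesis by simp
  qed
  finally show ?thesis .
qed

theorem mainTheorem9:
  fixes n :: nat
  assumes "n \<ge> 2"
  shows "\<forall>i\<in>{1..n}. \<forall>j\<in>{1..n}. \<forall>k\<in>{1..n}.
           \<exists>(A :: (nat \<Rightarrow> nat) set) (c :: (nat \<Rightarrow> nat) \<Rightarrow> complex).
             finite A \<and>
             (\<forall>\<alpha>\<in>A. (\<forall>m. m \<notin> {1..n} \<longrightarrow> \<alpha> m = 0) \<and> \<alpha> (n - 1) \<le> 1) \<and>
             (\<forall>V \<phi>. generic_chart n V \<phi> \<longrightarrow>
                (\<forall>v\<in>V. contra n \<phi> v i j k = (\<Sum>\<alpha>\<in>A. c \<alpha> * (\<Prod>m=1..n. v m ^ \<alpha> m))))"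
proof (intro ballI)
  fix i j k assume i: "i \<in> {1..n}" and j: "j \<in> {1..n}" and k: "k \<in> {1..n}"
  let ?S = "{1..n}"
  obtain a where rep: "\<forall>x. \<forall>c\<in>?S. Tt n i j x c = (\<Sum>r<n. \<Sum>m\<le>n. a r m * es ?S m x * es (?S-{c}) r x)"
    using repr_Tt[of n i j] unfolding repr_def by blast
  define \<delta> where "\<delta> m = (\<lambda>q::nat. if q = m then 1 else (0::nat))" for m
  define A where "A = insert (\<lambda>_. 0) (\<delta> ` ?S)"
  define c where "c \<alpha> = a (k-1) (\<Sum>q\<in>?S. q * \<alpha> q)" for \<alpha>
  have finA: "finite A" unfolding A_def by simp
  have condA: "\<forall>\<alpha>\<in>A. (\<forall>m. m \<notin> ?S \<longrightarrow> \<alpha> m = 0) \<and> \<alpha> (n - 1) \<le> 1"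
    unfolding A_def \<delta>_def by auto
  have inj: "inj_on \<delta> ?S"
  proof (rule inj_onI)
    fix x y assume "\<delta> x = \<delta> y"
    then have "\<delta> x x = \<delta> y x" by simp
    then show "x = y" unfolding \<delta>_def by (auto split: if_splits)
  qed
  have notin: "(\<lambda>_. 0) \<notin> \<delta> ` ?S"
  proof
    assume "(\<lambda>_. 0) \<in> \<delta> ` ?S"
    then obtain m where "(\<lambda>_. 0::nat) = \<delta> m" by blast
    then have "(0::nat) = \<delta> m m" by metis
    then show False unfolding \<delta>_def by simp
  qed
  have sumA: "(\<Sum>\<alpha>\<in>A. c \<alpha> * (\<Prod>m=1..n. v m ^ \<alpha> m)) = a (k-1) 0 + (\<Sum>m\<in>?S. a (k-1) m * v m)" for v :: "nat \<Rightarrow> complex"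
  proof -
    have "(\<Sum>\<alpha>\<in>A. c \<alpha> * (\<Prod>m=1..n. v m ^ \<alpha> m)) = c (\<lambda>_. 0) * (\<Prod>m=1..n. v m ^ 0) + (\<Sum>\<alpha>\<in>\<delta> ` ?S. c \<alpha> * (\<Prod>m=1..n. v m ^ \<alpha> m))"
      unfolding A_def using notin by simp
    also have "(\<Sum>\<alpha>\<in>\<delta> ` ?S. c \<alpha> * (\<Prod>m=1..n. v m ^ \<alpha> m)) = (\<Sum>m\<in>?S. c (\<delta> m) * (\<Prod>q=1..n. v q ^ \<delta> m q))"
      by (rule sum.reindex[OF inj, unfolded comp_def])
    also have "\<dots> = (\<Sum>m\<in>?S. a (k-1) m * v m)"
    proof (rule sum.cong[OF refl])
      fix m assume m: "m \<in> ?S"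
      have "(\<Sum>q\<in>?S. q * \<delta> m q) = m" unfolding \<delta>_def using m
        by (simp add: if_distrib[where f="\<lambda>z. _ * z"] cong: if_cong)
      moreover have "(\<Prod>q=1..n. v q ^ \<delta> m q) = v m"
      proof -
        have "(\<Prod>q=1..n. v q ^ \<delta> m q) = (\<Prod>q=1..n. if q = m then v q else 1)"
          unfolding \<delta>_def by (rule prod.cong) auto
        also have "\<dots> = v m" using m by simp
        finally show ?thesis .
      qed
      ultimately show "c (\<delta> m) * (\<Prod>q=1..n. v q ^ \<delta> m q) = a (k-1) m * v m" unfolding c_def by simp
    qed
    finally show ?thesis unfolding c_def by simp
  qed
  have "\<forall>V \<phi>. generic_chart n V \<phi> \<longrightarrow> (\<forall>v\<in>V. contra n \<phi> v i j k = (\<Sum>\<alpha>\<in>A. c \<alpha> * (\<Prod>m=1..n. v m ^ \<alpha> m)))"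
  proof (intro allI impI ballI)
    fix V \<phi> v assume gc: "generic_chart n V \<phi>" and v: "v \<in> V"
    show "contra n \<phi> v i j k = (\<Sum>\<alpha>\<in>A. c \<alpha> * (\<Prod>m=1..n. v m ^ \<alpha> m))"
      unfolding sumA using contra_lin[OF assms gc v i j k rep] .
  qed
  then show "\<exists>(A :: (nat \<Rightarrow> nat) set) (c :: (nat \<Rightarrow> nat) \<Rightarrow> complex).
             finite A \<and>
             (\<forall>\<alpha>\<in>A. (\<forall>m. m \<notin> {1..n} \<longrightarrow> \<alpha> m = 0) \<and> \<alpha> (n - 1) \<le> 1) \<and>
             (\<forall>V \<phi>. generic_chart n V \<phi> \<longrightarrow>
                (\<forall>v\<in>V. contra n \<phi> v i j k = (\<Sum>\<alpha>\<in>A. c \<alpha> * (\<Prod>m=1..n. v m ^ \<alpha> m))))"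
    using finA condA by blast
qed

end
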